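(* Let $\Lambda$ be a unital commutative ring, $q$ a non-negative integer, $\Lambda_q=\Lambda/q\Lambda$, and $\mathfrak g$ a Lie algebra over $\Lambda$ such that $\mathfrak g/(\mathfrak g\#_q\mathfrak g)$ is a free $\Lambda_q$-module. Let $i\colon\Gamma\big(\mathfrak g/(\mathfrak g\#_q\mathfrak g)\big)\to\mathfrak g\otimes^q\mathfrak g$ be the homomorphism $i\big(\gamma(g+\mathfrak g\#_q\mathfrak g)\big)=g\otimes g$, and let $p\colon\mathfrak g\otimes^q\mathfrak g\to\big(\mathfrak g/(\mathfrak g\#_q\mathfrak g)\big)\otimes^q\big(\mathfrak g/(\mathfrak g\#_q\mathfrak g)\big)$ be the canonical projection. Then $i\big(\Gamma(\mathfrak g/(\mathfrak g\#_q\mathfrak g))\big)\cap\operatorname{Ker}p=\{0\}$.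
   Context: All Lie algebras are over $\Lambda$. $\mathfrak g\#_q\mathfrak g$ is the $\Lambda$-submodule (an ideal) of $\mathfrak g$ generated by all $[h,g]$ and $qh'$, $h,h',g\in\mathfrak g$. Non-abelian $q$-tensor square: for $q\ge1$, $\mathfrak g\otimes^q\mathfrak g$ is the Lie algebra generated by symbols $h\otimes g$ and $\{h\}$ ($h,g\in\mathfrak g$) subject to, for all $h,h',g,g'\in\mathfrak g$, $\lambda,\lambda'\in\Lambda$: (1) $\lambda(h\otimes g)=\lambda h\otimes g=h\otimes\lambda g$; (2) $(h+h')\otimes g=h\otimes g+h'\otimes g$; (3) $h\otimes(g+g')=h\otimes g+h\otimes g'$; (4) $[h,h']\otimes g=h\otimes[h',g]-h'\otimes[h,g]$; (5) $h\otimes[g,g']=[g',h]\otimes g-[g,h]\otimes g'$; (6) $[h\otimes g,h'\otimes g']=[h,g]\otimes[h',g']$; (7) $[\{h'\},h\otimes g]=[qh',h]\otimes g+h\otimes[qh',g]$; (8) $\{\lambda h+\lambda'h'\}=\lambda\{h\}+\lambda'\{h'\}$; (9) $[\{h\},\{h'\}]=qh\otimes qh'$; (10) $\{[h,g]\}=q(h\otimes g)$. For $q=0$, generated by the $h\otimes g$ subject to (1)–(6) only. The map $p$ is induced by the quotient map $\mathfrak g\to\mathfrak g/(\mathfrak g\#_q\mathfrak g)$. Whitehead's quadratic functor: for a $\Lambda$-module $A$, $\Gamma(A)$ is the $\Lambda$-module generated by $\gamma(a)$, $a\in A$, subject to $\lambda^2\gamma(a)=\gamma(\lambda a)$; $\gamma(a+b+c)+\gamma(a)+\gamma(b)+\gamma(c)=\gamma(a+b)+\gamma(a+c)+\gamma(b+c)$;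 $\gamma(\lambda a+b)+\lambda\gamma(a)+\lambda\gamma(b)=\lambda\gamma(a+b)+\gamma(\lambda a)+\gamma(b)$. *)

theory Defs
  imports Main
begin

text \<open>Negation is scalar multiplication by -1.\<close>

record ('r, 'a) liealg =
  lcarrier :: "'a set"
  ladd :: "'a \<Rightarrow> 'a \<Rightarrow> 'a"
  lzero :: "'a"
  lsmult :: "'r \<Rightarrow> 'a \<Rightarrow> 'a"
  lbr :: "'a \<Rightarrow> 'a \<Rightarrow> 'a"

definition is_lie :: "('r::comm_ring_1, 'a) liealg \<Rightarrow> bool" where
  "is_lie L \<longleftrightarrow>
     lzero L \<in> lcarrier L \<and>
     (\<forall>x\<in>lcarrier L. \<forall>y\<in>lcarrier L. ladd L x y \<in> lcarrier L) \<and>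
     (\<forall>r. \<forall>x\<in>lcarrier L. lsmult L r x \<in> lcarrier L) \<and>
     (\<forall>x\<in>lcarrier L. \<forall>y\<in>lcarrier L. lbr L x y \<in> lcarrier L) \<and>
     (\<forall>x\<in>lcarrier L. \<forall>y\<in>lcarrier L. \<forall>z\<in>lcarrier L.
         ladd L (ladd L x y) z = ladd L x (ladd L y z)) \<and>
     (\<forall>x\<in>lcarrier L. \<forall>y\<in>lcarrier L. ladd L x y = ladd L y x) \<and>
     (\<forall>x\<in>lcarrier L. ladd L x (lzero L) = x) \<and>
     (\<forall>x\<in>lcarrier L. ladd L x (lsmult L (-1) x) = lzero L) \<and>
     (\<forall>r. \<forall>x\<in>lcarrier L. \<forall>y\<in>lcarrier L.
         lsmult L r (ladd L x y) = ladd L (lsmult L r x) (lsmult L r y)) \<and>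
     (\<forall>r s. \<forall>x\<in>lcarrier L. lsmult L (r + s) x = ladd L (lsmult L r x) (lsmult L s x)) \<and>
     (\<forall>r s. \<forall>x\<in>lcarrier L. lsmult L (r * s) x = lsmult L r (lsmult L s x)) \<and>
     (\<forall>x\<in>lcarrier L. lsmult L 1 x = x) \<and>
     (\<forall>x\<in>lcarrier L. \<forall>y\<in>lcarrier L. \<forall>z\<in>lcarrier L.
         lbr L (ladd L x y) z = ladd L (lbr L x z) (lbr L y z)) \<and>
     (\<forall>x\<in>lcarrier L. \<forall>y\<in>lcarrier L. \<forall>z\<in>lcarrier L.
         lbr L x (ladd L y z) = ladd L (lbr L x y) (lbr L x z)) \<and>
     (\<forall>r. \<forall>x\<in>lcarrier L. \<forall>y\<in>lcarrier L.
         lbr L (lsmult L r x) y = lsmult L r (lbr L x y) \<and>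
         lbr L x (lsmult L r y) = lsmult L r (lbr L x y)) \<and>
     (\<forall>x\<in>lcarrier L. lbr L x x = lzero L) \<and>
     (\<forall>x\<in>lcarrier L. \<forall>y\<in>lcarrier L. \<forall>z\<in>lcarrier L.
         ladd L (lbr L x (lbr L y z)) (ladd L (lbr L y (lbr L z x)) (lbr L z (lbr L x y)))
           = lzero L)"

inductive_set submod_gen :: "('r::comm_ring_1, 'a) liealg \<Rightarrow> 'a set \<Rightarrow> 'a set"
  for L :: "('r, 'a) liealg" and S :: "'a set" where
  sg_zero: "lzero L \<in> submod_gen L S"
| sg_gen: "s \<in> S \<Longrightarrow> s \<in> submod_gen L S"
| sg_add: "x \<in> submod_gen L S \<Longrightarrow> y \<in> submod_gen L S \<Longrightarrow> ladd L x y \<in> submod_gen L S"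
| sg_smult: "x \<in> submod_gen L S \<Longrightarrow> lsmult L r x \<in> submod_gen L S"

definition sharp :: "('r::comm_ring_1, 'a) liealg \<Rightarrow> nat \<Rightarrow> 'a set" where
  "sharp L q = submod_gen L
     ({lbr L h g | h g. h \<in> lcarrier L \<and> g \<in> lcarrier L} \<union>
      {lsmult L (of_nat q) h | h. h \<in> lcarrier L})"

definition coset :: "('r, 'a) liealg \<Rightarrow> 'a set \<Rightarrow> 'a \<Rightarrow> 'a set" where
  "coset L N x = {ladd L x n | n. n \<in> N}"

definition rep :: "'a set \<Rightarrow> 'a" where
  "rep A = (SOME x. x \<in> A)"

definition quot :: "('r::comm_ring_1, 'a) liealg \<Rightarrow> 'a set \<Rightarrow> ('r, 'a set) liealg" where
  "quot L N =
     \<lparr> lcarrier = coset L N ` lcarrier L,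
       ladd = (\<lambda>A B. coset L N (ladd L (rep A) (rep B))),
       lzero = coset L N (lzero L),
       lsmult = (\<lambda>r A. coset L N (lsmult L r (rep A))),
       lbr = (\<lambda>A B. coset L N (lbr L (rep A) (rep B))) \<rparr>"

definition lincomb :: "('r, 'a) liealg \<Rightarrow> ('r \<times> 'a) list \<Rightarrow> 'a" where
  "lincomb M xs = foldr (\<lambda>(c, b) acc. ladd M (lsmult M c b) acc) xs (lzero M)"

text \<open>M (a Lambda-module annihilated by q) is a free module over Lambda_q = Lambda / q Lambda:
there is a basis B such that every element is a finite Lambda-combination of B, and
a combination of distinct basis elements vanishes only if all coefficients lie in q Lambda
(i.e. vanish in Lambda_q).\<close>

definition free_mod_q :: "('r::comm_ring_1, 'a) liealg \<Rightarrow> nat \<Rightarrow> bool" where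
  "free_mod_q M q \<longleftrightarrow>
     (\<exists>B \<subseteq> lcarrier M.
        (\<forall>x\<in>lcarrier M. \<exists>xs. set (map snd xs) \<subseteq> B \<and> x = lincomb M xs) \<and>
        (\<forall>xs. set (map snd xs) \<subseteq> B \<longrightarrow> distinct (map snd xs) \<longrightarrow>
              lincomb M xs = lzero M \<longrightarrow> (\<forall>c\<in>set (map fst xs). (of_nat q :: 'r) dvd c)))"

datatype ('r, 'x) expr =
    EGen 'x
  | EZero
  | EAdd "('r, 'x) expr" "('r, 'x) expr"
  | ESmul 'r "('r, 'x) expr"
  | EBrk "('r, 'x) expr" "('r, 'x) expr"

fun emap :: "('x \<Rightarrow> 'y) \<Rightarrow> ('r, 'x) expr \<Rightarrow> ('r, 'y) expr" where
  "emap f (EGen x) = EGen (f x)"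
| "emap f EZero = EZero"
| "emap f (EAdd a b) = EAdd (emap f a) (emap f b)"
| "emap f (ESmul r a) = ESmul r (emap f a)"
| "emap f (EBrk a b) = EBrk (emap f a) (emap f b)"

text \<open>Expressions modulo lie_cong R form the Lie algebra presented by the
generators and relations R; two expressions denote the same element iff they are related.\<close>

inductive lie_cong :: "(('r::comm_ring_1, 'x) expr \<times> ('r, 'x) expr) set \<Rightarrow>
                        ('r, 'x) expr \<Rightarrow> ('r, 'x) expr \<Rightarrow> bool"
  for R where
  lc_rel: "(a, b) \<in> R \<Longrightarrow> lie_cong R a b"
| lc_refl: "lie_cong R a a"
| lc_sym: "lie_cong R a b \<Longrightarrow> lie_cong R b a"
| lc_trans: "lie_cong R a b \<Longrightarrow> lie_cong R b c \<Longrightarrow> lie_cong R a c"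
| lc_add: "lie_cong R a a' \<Longrightarrow> lie_cong R b b' \<Longrightarrow> lie_cong R (EAdd a b) (EAdd a' b')"
| lc_smul: "lie_cong R a a' \<Longrightarrow> lie_cong R (ESmul r a) (ESmul r a')"
| lc_brk: "lie_cong R a a' \<Longrightarrow> lie_cong R b b' \<Longrightarrow> lie_cong R (EBrk a b) (EBrk a' b')"
| lc_add_assoc: "lie_cong R (EAdd (EAdd a b) c) (EAdd a (EAdd b c))"
| lc_add_comm: "lie_cong R (EAdd a b) (EAdd b a)"
| lc_add_zero: "lie_cong R (EAdd a EZero) a"
| lc_add_neg: "lie_cong R (EAdd a (ESmul (-1) a)) EZero"
| lc_smul_add: "lie_cong R (ESmul r (EAdd a b)) (EAdd (ESmul r a) (ESmul r b))"
| lc_add_smul: "lie_cong R (ESmul (r + s) a) (EAdd (ESmul r a) (ESmul s a))"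
| lc_mult_smul: "lie_cong R (ESmul (r * s) a) (ESmul r (ESmul s a))"
| lc_one_smul: "lie_cong R (ESmul 1 a) a"
| lc_brk_addL: "lie_cong R (EBrk (EAdd a b) c) (EAdd (EBrk a c) (EBrk b c))"
| lc_brk_addR: "lie_cong R (EBrk a (EAdd b c)) (EAdd (EBrk a b) (EBrk a c))"
| lc_brk_smulL: "lie_cong R (EBrk (ESmul r a) b) (ESmul r (EBrk a b))"
| lc_brk_smulR: "lie_cong R (EBrk a (ESmul r b)) (ESmul r (EBrk a b))"
| lc_alt: "lie_cong R (EBrk a a) EZero"
| lc_jacobi: "lie_cong R (EAdd (EBrk a (EBrk b c)) (EAdd (EBrk b (EBrk c a)) (EBrk c (EBrk a b)))) EZero"

text \<open>Generator symbols: h \<otimes> g and {h}.\<close>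

datatype 'a tgen = Tens 'a 'a | Curly 'a

abbreviation T :: "'a \<Rightarrow> 'a \<Rightarrow> ('r, 'a tgen) expr" where
  "T h g \<equiv> EGen (Tens h g)"

abbreviation Cu :: "'a \<Rightarrow> ('r, 'a tgen) expr" where
  "Cu h \<equiv> EGen (Curly h)"

definition tsq_gens :: "('r, 'a) liealg \<Rightarrow> nat \<Rightarrow> 'a tgen set" where
  "tsq_gens L q = {Tens h g | h g. h \<in> lcarrier L \<and> g \<in> lcarrier L} \<union>
                  {Curly h | h. h \<in> lcarrier L \<and> q \<ge> 1}"

text \<open>Defining relations (1)-(10) (only (1)-(6) for q = 0). Non-admissible generator symbols
are set to zero, so that the presented algebra is generated exactly by the admissible ones.\<close>

definition tsq_rel :: "('r::comm_ring_1, 'a) liealg \<Rightarrow> nat \<Rightarrow>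
                       (('r, 'a tgen) expr \<times> ('r, 'a tgen) expr) set" where
  "tsq_rel L q =
     {(EGen x, EZero) | x. x \<notin> tsq_gens L q} \<union>
     \<comment> \<open>(1)\<close>
     {(ESmul r (T h g), T (lsmult L r h) g) | r h g. h \<in> lcarrier L \<and> g \<in> lcarrier L} \<union>
     {(ESmul r (T h g), T h (lsmult L r g)) | r h g. h \<in> lcarrier L \<and> g \<in> lcarrier L} \<union>
     \<comment> \<open>(2)\<close>
     {(T (ladd L h h') g, EAdd (T h g) (T h' g)) | h h' g.
         h \<in> lcarrier L \<and> h' \<in> lcarrier L \<and> g \<in> lcarrier L} \<union>
     \<comment> \<open>(3)\<close>
     {(T h (ladd L g g'), EAdd (T h g) (T h g')) | h g g'.
         h \<in> lcarrier L \<and> g \<in> lcarrier L \<and> g' \<in> lcarrier L} \<union>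
     \<comment> \<open>(4)\<close>
     {(T (lbr L h h') g, EAdd (T h (lbr L h' g)) (ESmul (-1) (T h' (lbr L h g)))) | h h' g.
         h \<in> lcarrier L \<and> h' \<in> lcarrier L \<and> g \<in> lcarrier L} \<union>
     \<comment> \<open>(5)\<close>
     {(T h (lbr L g g'), EAdd (T (lbr L g' h) g) (ESmul (-1) (T (lbr L g h) g'))) | h g g'.
         h \<in> lcarrier L \<and> g \<in> lcarrier L \<and> g' \<in> lcarrier L} \<union>
     \<comment> \<open>(6)\<close>
     {(EBrk (T h g) (T h' g'), T (lbr L h g) (lbr L h' g')) | h g h' g'.
         h \<in> lcarrier L \<and> g \<in> lcarrier L \<and> h' \<in> lcarrier L \<and> g' \<in> lcarrier L} \<union>
     (if q \<ge> 1 then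
       \<comment> \<open>(7)\<close>
       {(EBrk (Cu h') (T h g),
         EAdd (T (lbr L (lsmult L (of_nat q) h') h) g) (T h (lbr L (lsmult L (of_nat q) h') g)))
         | h' h g. h' \<in> lcarrier L \<and> h \<in> lcarrier L \<and> g \<in> lcarrier L} \<union>
       \<comment> \<open>(8)\<close>
       {(Cu (ladd L (lsmult L r h) (lsmult L r' h')), EAdd (ESmul r (Cu h)) (ESmul r' (Cu h')))
         | r r' h h'. h \<in> lcarrier L \<and> h' \<in> lcarrier L} \<union>
       \<comment> \<open>(9)\<close>
       {(EBrk (Cu h) (Cu h'), T (lsmult L (of_nat q) h) (lsmult L (of_nat q) h'))
         | h h'. h \<in> lcarrier L \<and> h' \<in> lcarrier L} \<union>
       \<comment> \<open>(10)\<close>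
       {(Cu (lbr L h g), ESmul (of_nat q) (T h g)) | h g. h \<in> lcarrier L \<and> g \<in> lcarrier L}
      else {})"

text \<open>Elements of g \<otimes>^q g are the classes of expressions modulo lie_cong (tsq_rel L q).\<close>

abbreviation tsq_eq :: "('r::comm_ring_1, 'a) liealg \<Rightarrow> nat \<Rightarrow>
                        ('r, 'a tgen) expr \<Rightarrow> ('r, 'a tgen) expr \<Rightarrow> bool" where
  "tsq_eq L q \<equiv> lie_cong (tsq_rel L q)"

inductive_set espan :: "('r, 'x) expr set \<Rightarrow> ('r, 'x) expr set" for S where
  es_zero: "EZero \<in> espan S"
| es_gen: "s \<in> S \<Longrightarrow> s \<in> espan S"
| es_add: "a \<in> espan S \<Longrightarrow> b \<in> espan S \<Longrightarrow> EAdd a b \<in> espan S"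
| es_smul: "a \<in> espan S \<Longrightarrow> ESmul r a \<in> espan S"

fun pgen :: "('r, 'a) liealg \<Rightarrow> 'a set \<Rightarrow> 'a tgen \<Rightarrow> 'a set tgen" where
  "pgen L N (Tens h g) = Tens (coset L N h) (coset L N g)"
| "pgen L N (Curly h) = Curly (coset L N h)"

end

theory Submission
  imports Defs
begin

fun lin :: "('r::comm_ring_1, 'x) expr \<Rightarrow> ('r, 'x) expr \<Rightarrow> 'r" where
  "lin EZero = (\<lambda>t. 0)"
| "lin (EGen x) = (\<lambda>t. if t = EGen x then 1 else 0)"
| "lin (EBrk a b) = (\<lambda>t. if t = EBrk a b then 1 else 0)"
| "lin (EAdd a b) = (\<lambda>t. lin a t + lin b t)"
| "lin (ESmul r a) = (\<lambda>t. r * lin a t)"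

fun atoms :: "('r, 'x) expr \<Rightarrow> ('r, 'x) expr list" where
  "atoms EZero = []"
| "atoms (EGen x) = [EGen x]"
| "atoms (EBrk a b) = [EBrk a b]"
| "atoms (EAdd a b) = atoms a @ atoms b"
| "atoms (ESmul r a) = atoms a"

definition lsum :: "('r, 'x) expr list \<Rightarrow> (('r, 'x) expr \<Rightarrow> 'r) \<Rightarrow> ('r, 'x) expr" where
  "lsum ts f = foldr (\<lambda>t acc. EAdd (ESmul (f t) t) acc) ts EZero"

lemma lsum_simps[simp]:
  "lsum [] f = EZero"
  "lsum (t # ts) f = EAdd (ESmul (f t) t) (lsum ts f)"
  by (simp_all add: lsum_def)

lemma lin_notin: "t \<notin> set (atoms a) \<Longrightarrow> lin a t = 0"
  by (induction a) auto

context fixes R :: "(('r::comm_ring_1, 'x) expr \<times> ('r, 'x) expr) set"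
begin

abbreviation eqv (infix "\<approx>" 50) where "a \<approx> b \<equiv> lie_cong R a b"

lemma c_trans[trans]: "a \<approx> b \<Longrightarrow> b \<approx> c \<Longrightarrow> a \<approx> c"
  by (rule lc_trans)

lemma c_sym: "a \<approx> b \<Longrightarrow> b \<approx> a" by (rule lc_sym)

lemma c_zero_add: "EAdd EZero a \<approx> a"
  by (meson lc_add_comm lc_add_zero lc_trans)

lemma c_add_cancel_aux: "EAdd s s \<approx> s \<Longrightarrow> s \<approx> EZero"
proof -
  assume h: "EAdd s s \<approx> s"
  have "s \<approx> EAdd s EZero" by (rule lc_sym, rule lc_add_zero)
  also have "EAdd s EZero \<approx> EAdd s (EAdd s (ESmul (-1) s))"
    by (rule lc_add, rule lc_refl, rule lc_sym, rule lc_add_neg)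
  also have "\<dots> \<approx> EAdd (EAdd s s) (ESmul (-1) s)" by (rule lc_sym, rule lc_add_assoc)
  also have "\<dots> \<approx> EAdd s (ESmul (-1) s)" by (rule lc_add[OF h lc_refl])
  also have "\<dots> \<approx> EZero" by (rule lc_add_neg)
  finally show ?thesis .
qed

lemma c_smul0: "ESmul 0 a \<approx> EZero"
proof (rule c_add_cancel_aux)
  have "EAdd (ESmul 0 a) (ESmul 0 a) \<approx> ESmul (0 + 0) a" by (rule lc_sym, rule lc_add_smul)
  thus "EAdd (ESmul 0 a) (ESmul 0 a) \<approx> ESmul 0 a" by simp
qed

lemma c_smul_zero: "ESmul r EZero \<approx> EZero"
proof -
  have "ESmul r EZero \<approx> ESmul r (ESmul 0 EZero)" by (rule lc_smul, rule lc_sym, rule c_smul0)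
  also have "\<dots> \<approx> ESmul (r * 0) EZero" by (rule lc_sym, rule lc_mult_smul)
  also have "\<dots> \<approx> EZero" by (simp add: c_smul0)
  finally show ?thesis .
qed

lemma c_swap4: "EAdd (EAdd a b) (EAdd c d) \<approx> EAdd (EAdd a c) (EAdd b d)"
proof -
  have "EAdd (EAdd a b) (EAdd c d) \<approx> EAdd a (EAdd b (EAdd c d))" by (rule lc_add_assoc)
  also have "\<dots> \<approx> EAdd a (EAdd (EAdd b c) d)" by (rule lc_add[OF lc_refl], rule lc_sym, rule lc_add_assoc)
  also have "\<dots> \<approx> EAdd a (EAdd (EAdd c b) d)" by (rule lc_add[OF lc_refl], rule lc_add[OF lc_add_comm lc_refl])
  also have "\<dots> \<approx> EAdd a (EAdd c (EAdd b d))" by (rule lc_add[OF lc_refl], rule lc_add_assoc)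
  also have "\<dots> \<approx> EAdd (EAdd a c) (EAdd b d)" by (rule lc_sym, rule lc_add_assoc)
  finally show ?thesis .
qed

lemma lsum_zero: "(\<forall>t\<in>set ts. f t = 0) \<Longrightarrow> lsum ts f \<approx> EZero"
proof (induction ts)
  case Nil then show ?case by (simp add: lc_refl)
next
  case (Cons t ts)
  have "lsum (t # ts) f \<approx> EAdd EZero EZero"
    using Cons by (auto intro!: lc_add c_smul0)
  also have "\<dots> \<approx> EZero" by (rule lc_add_zero)
  finally show ?case .
qed

lemma lsum_atom: "distinct ts \<Longrightarrow> a \<in> set ts \<Longrightarrow> lsum ts (\<lambda>t. if t = a then 1 else 0) \<approx> a"
proof (induction ts)
  case Nil then show ?case by simp
next
  case (Cons t ts)
  show ?case
  proof (cases "t = a")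
    case True
    with Cons have "lsum ts (\<lambda>t. if t = a then 1 else 0) \<approx> EZero"
      by (intro lsum_zero) auto
    hence "lsum (t # ts) (\<lambda>t. if t = a then 1 else 0) \<approx> EAdd a EZero"
      using True by (auto intro!: lc_add lc_one_smul)
    thus ?thesis using lc_add_zero lc_trans by blast
  next
    case False
    with Cons have "lsum (t # ts) (\<lambda>t. if t = a then 1 else 0) \<approx> EAdd EZero a"
      by (auto intro!: lc_add c_smul0)
    thus ?thesis using c_zero_add lc_trans by blast
  qed
qed

lemma lsum_add: "lsum ts (\<lambda>t. f t + g t) \<approx> EAdd (lsum ts f) (lsum ts g)"
proof (induction ts)
  case Nil then show ?case by (simp add: lc_sym lc_add_zero)
next
  case (Cons t ts)
  have "lsum (t # ts) (\<lambda>t. f t + g t) \<approx>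
        EAdd (EAdd (ESmul (f t) t) (ESmul (g t) t)) (EAdd (lsum ts f) (lsum ts g))"
    using Cons by (auto intro!: lc_add lc_add_smul)
  also have "\<dots> \<approx> EAdd (lsum (t # ts) f) (lsum (t # ts) g)" by (simp add: c_swap4)
  finally show ?case .
qed

lemma lsum_smul: "lsum ts (\<lambda>t. r * f t) \<approx> ESmul r (lsum ts f)"
proof (induction ts)
  case Nil then show ?case by (simp add: lc_sym c_smul_zero)
next
  case (Cons t ts)
  have "lsum (t # ts) (\<lambda>t. r * f t) \<approx> EAdd (ESmul r (ESmul (f t) t)) (ESmul r (lsum ts f))"
    using Cons by (auto intro!: lc_add lc_mult_smul)
  also have "\<dots> \<approx> ESmul r (lsum (t # ts) f)" by (simp add: lc_sym lc_smul_add)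
  finally show ?case .
qed

lemma lsum_cong_fun: "(\<forall>t\<in>set ts. f t = g t) \<Longrightarrow> lsum ts f = lsum ts g"
  by (induction ts) auto

lemma lin_nf: "distinct ts \<Longrightarrow> set (atoms a) \<subseteq> set ts \<Longrightarrow> a \<approx> lsum ts (lin a)"
proof (induction a)
  case (EGen x)
  then show ?case using lsum_atom[of ts "EGen x"] by (simp add: lc_sym)
next
  case EZero
  then show ?case using lsum_zero[of ts "\<lambda>t. 0"] by (simp add: lc_sym)
next
  case (EAdd a b)
  then have "EAdd a b \<approx> EAdd (lsum ts (lin a)) (lsum ts (lin b))" by (auto intro!: lc_add)
  also have "\<dots> \<approx> lsum ts (lin (EAdd a b))" using lsum_add by (simp add: lc_sym)
  finally show ?case .
next
  case (ESmul r a)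
  then have "ESmul r a \<approx> ESmul r (lsum ts (lin a))" by (auto intro!: lc_smul)
  also have "\<dots> \<approx> lsum ts (lin (ESmul r a))" using lsum_smul by (simp add: lc_sym)
  finally show ?case .
next
  case (EBrk a b)
  then show ?case using lsum_atom[of ts "EBrk a b"] by (simp add: lc_sym)
qed

lemma lin_cong: "lin a = lin b \<Longrightarrow> a \<approx> b"
proof -
  assume h: "lin a = lin b"
  let ?ts = "remdups (atoms a @ atoms b)"
  have "a \<approx> lsum ?ts (lin a)" by (rule lin_nf) auto
  also have "\<dots> = lsum ?ts (lin b)" using h by simp
  also have "lsum ?ts (lin b) \<approx> b" by (rule lc_sym, rule lin_nf) auto
  finally show ?thesis .
qed

lemma lin_cong': "a \<approx> b \<Longrightarrow> lin b = lin c \<Longrightarrow> a \<approx> c"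
  using lin_cong lc_trans by blast

end

fun ev :: "('r::comm_ring_1, 'a) liealg \<Rightarrow> ('r, 'a) expr \<Rightarrow> 'a" where
  "ev L (EGen x) = (if x \<in> lcarrier L then x else lzero L)"
| "ev L EZero = lzero L"
| "ev L (EAdd a b) = ladd L (ev L a) (ev L b)"
| "ev L (ESmul r a) = lsmult L r (ev L a)"
| "ev L (EBrk a b) = lbr L (ev L a) (ev L b)"

lemma ev_carrier: "is_lie L \<Longrightarrow> ev L a \<in> lcarrier L"
  by (induction a) (auto simp: is_lie_def)

context fixes L :: "('r::comm_ring_1, 'a) liealg" assumes lie: "is_lie L"
begin
lemmas ax = is_lie_def[THEN iffD1, OF lie]
lemma Lz: "lzero L \<in> lcarrier L" using ax[THEN conjunct1] by blast
lemma Ladd: "x \<in> lcarrier L \<Longrightarrow> y \<in> lcarrier L \<Longrightarrow> ladd L x y \<in> lcarrier L" using ax[THEN conjunct2, THEN conjunct1] by blast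
lemma Lsm: "x \<in> lcarrier L \<Longrightarrow> lsmult L r x \<in> lcarrier L" using ax[THEN conjunct2, THEN conjunct2, THEN conjunct1] by blast
lemma Lbr: "x \<in> lcarrier L \<Longrightarrow> y \<in> lcarrier L \<Longrightarrow> lbr L x y \<in> lcarrier L" using ax[THEN conjunct2, THEN conjunct2, THEN conjunct2, THEN conjunct1] by blast
lemma L_assoc: "x \<in> lcarrier L \<Longrightarrow> y \<in> lcarrier L \<Longrightarrow> z \<in> lcarrier L \<Longrightarrow> ladd L (ladd L x y) z = ladd L x (ladd L y z)" using ax[THEN conjunct2, THEN conjunct2, THEN conjunct2, THEN conjunct2, THEN conjunct1] by blast
lemma L_comm: "x \<in> lcarrier L \<Longrightarrow> y \<in> lcarrier L \<Longrightarrow> ladd L x y = ladd L y x" using ax[THEN conjunct2, THEN conjunct2, THEN conjunct2, THEN conjunct2, THEN conjunct2, THEN conjunct1] by blast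
lemma L_zero: "x \<in> lcarrier L \<Longrightarrow> ladd L x (lzero L) = x" using ax[THEN conjunct2, THEN conjunct2, THEN conjunct2, THEN conjunct2, THEN conjunct2, THEN conjunct2, THEN conjunct1] by blast
lemma L_neg: "x \<in> lcarrier L \<Longrightarrow> ladd L x (lsmult L (-1) x) = lzero L" using ax[THEN conjunct2, THEN conjunct2, THEN conjunct2, THEN conjunct2, THEN conjunct2, THEN conjunct2, THEN conjunct2, THEN conjunct1] by blast
lemma L_smadd: "x \<in> lcarrier L \<Longrightarrow> y \<in> lcarrier L \<Longrightarrow> lsmult L r (ladd L x y) = ladd L (lsmult L r x) (lsmult L r y)" using ax[THEN conjunct2, THEN conjunct2, THEN conjunct2, THEN conjunct2, THEN conjunct2, THEN conjunct2, THEN conjunct2, THEN conjunct2, THEN conjunct1] by blast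
lemma L_addsm: "x \<in> lcarrier L \<Longrightarrow> lsmult L (r + s) x = ladd L (lsmult L r x) (lsmult L s x)" using ax[THEN conjunct2, THEN conjunct2, THEN conjunct2, THEN conjunct2, THEN conjunct2, THEN conjunct2, THEN conjunct2, THEN conjunct2, THEN conjunct2, THEN conjunct1] by blast
lemma L_multsm: "x \<in> lcarrier L \<Longrightarrow> lsmult L (r * s) x = lsmult L r (lsmult L s x)" using ax[THEN conjunct2, THEN conjunct2, THEN conjunct2, THEN conjunct2, THEN conjunct2, THEN conjunct2, THEN conjunct2, THEN conjunct2, THEN conjunct2, THEN conjunct2, THEN conjunct1] by blast
lemma L_one: "x \<in> lcarrier L \<Longrightarrow> lsmult L 1 x = x" using ax[THEN conjunct2, THEN conjunct2, THEN conjunct2, THEN conjunct2, THEN conjunct2, THEN conjunct2, THEN conjunct2, THEN conjunct2, THEN conjunct2, THEN conjunct2, THEN conjunct2, THEN conjunct1] by blast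
lemma L_braddL: "x \<in> lcarrier L \<Longrightarrow> y \<in> lcarrier L \<Longrightarrow> z \<in> lcarrier L \<Longrightarrow> lbr L (ladd L x y) z = ladd L (lbr L x z) (lbr L y z)" using ax[THEN conjunct2, THEN conjunct2, THEN conjunct2, THEN conjunct2, THEN conjunct2, THEN conjunct2, THEN conjunct2, THEN conjunct2, THEN conjunct2, THEN conjunct2, THEN conjunct2, THEN conjunct2, THEN conjunct1] by blast
lemma L_braddR: "x \<in> lcarrier L \<Longrightarrow> y \<in> lcarrier L \<Longrightarrow> z \<in> lcarrier L \<Longrightarrow> lbr L x (ladd L y z) = ladd L (lbr L x y) (lbr L x z)" using ax[THEN conjunct2, THEN conjunct2, THEN conjunct2, THEN conjunct2, THEN conjunct2, THEN conjunct2, THEN conjunct2, THEN conjunct2, THEN conjunct2, THEN conjunct2, THEN conjunct2, THEN conjunct2, THEN conjunct2, THEN conjunct1] by blast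
lemma L_brsmL: "x \<in> lcarrier L \<Longrightarrow> y \<in> lcarrier L \<Longrightarrow> lbr L (lsmult L r x) y = lsmult L r (lbr L x y)" using ax[THEN conjunct2, THEN conjunct2, THEN conjunct2, THEN conjunct2, THEN conjunct2, THEN conjunct2, THEN conjunct2, THEN conjunct2, THEN conjunct2, THEN conjunct2, THEN conjunct2, THEN conjunct2, THEN conjunct2, THEN conjunct2, THEN conjunct1] by blast
lemma L_brsmR: "x \<in> lcarrier L \<Longrightarrow> y \<in> lcarrier L \<Longrightarrow> lbr L x (lsmult L r y) = lsmult L r (lbr L x y)" using ax[THEN conjunct2, THEN conjunct2, THEN conjunct2, THEN conjunct2, THEN conjunct2, THEN conjunct2, THEN conjunct2, THEN conjunct2, THEN conjunct2, THEN conjunct2, THEN conjunct2, THEN conjunct2, THEN conjunct2, THEN conjunct2, THEN conjunct1] by blast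
lemma L_alt: "x \<in> lcarrier L \<Longrightarrow> lbr L x x = lzero L" using ax[THEN conjunct2, THEN conjunct2, THEN conjunct2, THEN conjunct2, THEN conjunct2, THEN conjunct2, THEN conjunct2, THEN conjunct2, THEN conjunct2, THEN conjunct2, THEN conjunct2, THEN conjunct2, THEN conjunct2, THEN conjunct2, THEN conjunct2, THEN conjunct1] by blast
lemma L_jac: "x \<in> lcarrier L \<Longrightarrow> y \<in> lcarrier L \<Longrightarrow> z \<in> lcarrier L \<Longrightarrow> ladd L (lbr L x (lbr L y z)) (ladd L (lbr L y (lbr L z x)) (lbr L z (lbr L x y))) = lzero L" using ax[THEN conjunct2, THEN conjunct2, THEN conjunct2, THEN conjunct2, THEN conjunct2, THEN conjunct2, THEN conjunct2, THEN conjunct2, THEN conjunct2, THEN conjunct2, THEN conjunct2, THEN conjunct2, THEN conjunct2, THEN conjunct2, THEN conjunct2, THEN conjunct2] by blast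

lemmas Lcl = Lz Ladd Lsm Lbr

lemma evc: "ev L a \<in> lcarrier L"
  by (induction a) (auto simp: Lcl)

lemma ev_sound: "lie_cong {} a b \<Longrightarrow> ev L a = ev L b"
proof (induction rule: lie_cong.induct)
qed (auto simp: evc L_assoc L_comm L_zero L_neg L_smadd L_addsm L_multsm L_one L_braddL L_braddR
   L_brsmL L_brsmR L_alt L_jac)

end

lemma ev_lin: "is_lie L \<Longrightarrow> lin a = lin b \<Longrightarrow> ev L a = ev L b"
  using ev_sound lin_cong by blast

lemma lin_EGen_ev: "x \<in> lcarrier L \<Longrightarrow> ev L (EGen x) = x" by simp

definition submod where
  "submod L N \<longleftrightarrow> N \<subseteq> lcarrier L \<and> lzero L \<in> N \<and> (\<forall>x\<in>N. \<forall>y\<in>N. ladd L x y \<in> N)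
     \<and> (\<forall>r. \<forall>x\<in>N. lsmult L r x \<in> N)"

lemma submod_gen_C: assumes lie: "is_lie L" and S: "S \<subseteq> lcarrier L"
  shows "x \<in> submod_gen L S \<Longrightarrow> x \<in> lcarrier L"
proof (induction rule: submod_gen.induct)
  case sg_zero then show ?case by (rule Lz[OF lie])
next
  case (sg_gen s) then show ?case using S by blast
next
  case (sg_add x y) then show ?case by (simp add: Ladd[OF lie])
next
  case (sg_smult x r) then show ?case by (simp add: Lsm[OF lie])
qed

lemma sharp_submod: assumes lie: "is_lie L" shows "submod L (sharp L q)"
proof -
  have S: "({lbr L h g | h g. h \<in> lcarrier L \<and> g \<in> lcarrier L} \<union>
      {lsmult L (of_nat q) h | h. h \<in> lcarrier L}) \<subseteq> lcarrier L"
    using Lbr[OF lie] Lsm[OF lie] by blast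
  show ?thesis unfolding submod_def sharp_def
  proof (intro conjI ballI allI subsetI)
  qed (auto intro: submod_gen_C[OF lie S] sg_zero sg_add sg_smult)
qed

lemma sharp_br: "x \<in> lcarrier L \<Longrightarrow> y \<in> lcarrier L \<Longrightarrow> lbr L x y \<in> sharp L q"
  unfolding sharp_def by (rule sg_gen) blast

lemma sharp_q: "x \<in> lcarrier L \<Longrightarrow> lsmult L (of_nat q) x \<in> sharp L q"
  unfolding sharp_def by (rule sg_gen) blast

context fixes L :: "('r::comm_ring_1, 'a) liealg" and N assumes lie: "is_lie L" and sm: "submod L N"
begin

lemma NC: "x \<in> N \<Longrightarrow> x \<in> lcarrier L" using sm unfolding submod_def by blast
lemma N0: "lzero L \<in> N" using sm unfolding submod_def by blast
lemma Nadd: "x \<in> N \<Longrightarrow> y \<in> N \<Longrightarrow> ladd L x y \<in> N" using sm unfolding submod_def by blast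
lemma Nsm: "x \<in> N \<Longrightarrow> lsmult L r x \<in> N" using sm unfolding submod_def by blast

lemmas LC = Lcl[OF lie]

lemma coset_eq: assumes x: "x \<in> lcarrier L" and y: "y \<in> lcarrier L"
  shows "coset L N x = coset L N y \<longleftrightarrow> ladd L x (lsmult L (-1) y) \<in> N"
proof
  assume h: "coset L N x = coset L N y"
  have "x \<in> coset L N x" unfolding coset_def using L_zero[OF lie x] N0 by force
  with h obtain n where n: "n \<in> N" "x = ladd L y n" unfolding coset_def by auto
  have "ev L (EAdd (EAdd (EGen y) (EGen n)) (ESmul (-1) (EGen y))) = ev L (EGen n)"
    by (rule ev_lin[OF lie]) (simp add: fun_eq_iff)
  thus "ladd L x (lsmult L (-1) y) \<in> N" using n y NC by simp
next
  assume h: "ladd L x (lsmult L (-1) y) \<in> N"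
  have "z \<in> coset L N y" if "z \<in> coset L N x" for z
  proof -
    from that obtain n where n: "n \<in> N" "z = ladd L x n" unfolding coset_def by auto
    have "ev L (EAdd (EGen x) (EGen n)) = ev L (EAdd (EGen y) (EAdd (EAdd (EGen x) (ESmul (-1) (EGen y))) (EGen n)))"
      by (rule ev_lin[OF lie]) (simp add: fun_eq_iff)
    hence "z = ladd L y (ladd L (ladd L x (lsmult L (-1) y)) n)" using n x y NC by simp
    thus ?thesis unfolding coset_def using Nadd[OF h n(1)] by blast
  qed
  moreover have "z \<in> coset L N x" if "z \<in> coset L N y" for z
  proof -
    from that obtain n where n: "n \<in> N" "z = ladd L y n" unfolding coset_def by auto
    have "ev L (EAdd (EGen y) (EGen n)) = ev L (EAdd (EGen x) (EAdd (ESmul (-1) (EAdd (EGen x) (ESmul (-1) (EGen y)))) (EGen n)))"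
      by (rule ev_lin[OF lie]) (simp add: fun_eq_iff)
    hence "z = ladd L x (ladd L (lsmult L (-1) (ladd L x (lsmult L (-1) y))) n)" using n x y NC by simp
    thus ?thesis unfolding coset_def using Nadd[OF Nsm[OF h] n(1)] by blast
  qed
  ultimately show "coset L N x = coset L N y" by blast
qed

lemma rep_coset: assumes x: "x \<in> lcarrier L"
  shows "\<exists>n\<in>N. rep (coset L N x) = ladd L x n"
proof -
  have "x \<in> coset L N x" unfolding coset_def using L_zero[OF lie x] N0 by force
  hence "rep (coset L N x) \<in> coset L N x" unfolding rep_def by (rule someI)
  thus ?thesis unfolding coset_def by auto
qed

lemma rep_coset_C: "x \<in> lcarrier L \<Longrightarrow> rep (coset L N x) \<in> lcarrier L"
  using rep_coset NC LC by metis

lemma coset_rep: assumes x: "x \<in> lcarrier L" shows "coset L N (rep (coset L N x)) = coset L N x"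
proof -
  obtain n where n: "n \<in> N" "rep (coset L N x) = ladd L x n" using rep_coset[OF x] by blast
  have "ev L (EAdd (EAdd (EGen x) (EGen n)) (ESmul (-1) (EGen x))) = ev L (EGen n)"
    by (rule ev_lin[OF lie]) (simp add: fun_eq_iff)
  hence "ladd L (ladd L x n) (lsmult L (-1) x) \<in> N" using n x NC by simp
  then show ?thesis using coset_eq n x NC LC by metis
qed

lemma quot_add: assumes x: "x \<in> lcarrier L" and y: "y \<in> lcarrier L"
  shows "ladd (quot L N) (coset L N x) (coset L N y) = coset L N (ladd L x y)"
proof -
  obtain n where n: "n \<in> N" "rep (coset L N x) = ladd L x n" using rep_coset[OF x] by blast
  obtain m where m: "m \<in> N" "rep (coset L N y) = ladd L y m" using rep_coset[OF y] by blast
  have "ev L (EAdd (EAdd (EAdd (EGen x) (EGen n)) (EAdd (EGen y) (EGen m))) (ESmul (-1) (EAdd (EGen x) (EGen y))))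
      = ev L (EAdd (EGen n) (EGen m))"
    by (rule ev_lin[OF lie]) (simp add: fun_eq_iff)
  hence "ladd L (ladd L (ladd L x n) (ladd L y m)) (lsmult L (-1) (ladd L x y)) \<in> N"
    using n m x y NC Nadd by simp
  hence "coset L N (ladd L (ladd L x n) (ladd L y m)) = coset L N (ladd L x y)"
    using coset_eq n m x y NC LC by metis
  thus ?thesis unfolding quot_def using n m by simp
qed

lemma quot_smult: assumes x: "x \<in> lcarrier L"
  shows "lsmult (quot L N) r (coset L N x) = coset L N (lsmult L r x)"
proof -
  obtain n where n: "n \<in> N" "rep (coset L N x) = ladd L x n" using rep_coset[OF x] by blast
  have "ev L (EAdd (ESmul r (EAdd (EGen x) (EGen n))) (ESmul (-1) (ESmul r (EGen x))))
      = ev L (ESmul r (EGen n))"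
    by (rule ev_lin[OF lie]) (simp add: fun_eq_iff)
  hence "ladd L (lsmult L r (ladd L x n)) (lsmult L (-1) (lsmult L r x)) \<in> N"
    using n x NC Nsm by simp
  hence "coset L N (lsmult L r (ladd L x n)) = coset L N (lsmult L r x)"
    using coset_eq n x NC LC by metis
  thus ?thesis unfolding quot_def using n by simp
qed


lemma quot_carrier: "lcarrier (quot L N) = coset L N ` lcarrier L" by (simp add: quot_def)
lemma quot_zero: "lzero (quot L N) = coset L N (lzero L)" by (simp add: quot_def)

lemma L_sm0: "lsmult L r (lzero L) = lzero L"
proof -
  have "ev L (ESmul r EZero) = ev L EZero" by (rule ev_lin[OF lie]) (simp add: fun_eq_iff)
  thus ?thesis by simp
qed

lemma L_0sm: "x \<in> lcarrier L \<Longrightarrow> lsmult L 0 x = lzero L"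
proof -
  assume x: "x \<in> lcarrier L"
  have "ev L (ESmul 0 (EGen x)) = ev L EZero" by (rule ev_lin[OF lie]) (simp add: fun_eq_iff)
  thus ?thesis using x by simp
qed

lemma quot_br: assumes brN: "\<forall>x\<in>lcarrier L. \<forall>y\<in>lcarrier L. lbr L x y \<in> N"
  and x: "x \<in> lcarrier L" and y: "y \<in> lcarrier L"
  shows "lbr (quot L N) (coset L N x) (coset L N y) = coset L N (lzero L)"
proof -
  have rx: "rep (coset L N x) \<in> lcarrier L" "rep (coset L N y) \<in> lcarrier L"
    using rep_coset_C x y by auto
  hence b: "lbr L (rep (coset L N x)) (rep (coset L N y)) \<in> N" using brN by blast
  hence bC: "lbr L (rep (coset L N x)) (rep (coset L N y)) \<in> lcarrier L" using NC by blast
  have "ladd L (lbr L (rep (coset L N x)) (rep (coset L N y))) (lsmult L (-1) (lzero L))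
     = lbr L (rep (coset L N x)) (rep (coset L N y))"
    using L_sm0 L_zero[OF lie bC] by simp
  hence "coset L N (lbr L (rep (coset L N x)) (rep (coset L N y))) = coset L N (lzero L)"
    using coset_eq[OF bC Lz[OF lie]] b by simp
  thus ?thesis by (simp add: quot_def)
qed

lemma L_lcomm: "x \<in> lcarrier L \<Longrightarrow> y \<in> lcarrier L \<Longrightarrow> z \<in> lcarrier L \<Longrightarrow>
   ladd L x (ladd L y z) = ladd L y (ladd L x z)"
  by (metis L_assoc[OF lie] L_comm[OF lie])

lemma ball_img: "(\<forall>x\<in>f ` A. P x) = (\<forall>x\<in>A. P (f x))" by auto

lemma quot_is_lie: assumes brN: "\<forall>x\<in>lcarrier L. \<forall>y\<in>lcarrier L. lbr L x y \<in> N"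
  shows "is_lie (quot L N)"
  unfolding is_lie_def quot_carrier ball_img quot_zero
  by (simp add: quot_add quot_smult quot_br[OF brN] LC L_assoc[OF lie] L_comm[OF lie] L_lcomm L_zero[OF lie]
     L_neg[OF lie] L_smadd[OF lie] L_addsm[OF lie] L_multsm[OF lie] L_one[OF lie] L_sm0)

end

definition coefsum :: "'m \<Rightarrow> ('r::comm_ring_1 \<times> 'm) list \<Rightarrow> 'r" where
  "coefsum b xs = sum_list (map fst (filter (\<lambda>p. snd p = b) xs))"

lemma coefsum_simps[simp]:
  "coefsum b [] = 0"
  "coefsum b ((c, d) # xs) = (if d = b then c else 0) + coefsum b xs"
  by (simp_all add: coefsum_def)

lemma coefsum_append[simp]: "coefsum b (xs @ ys) = coefsum b xs + coefsum b ys"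
  by (induction xs) auto

lemma coefsum_neg[simp]: "coefsum b (map (\<lambda>(c, d). (- c, d)) ys) = - coefsum b ys"
  by (induction ys) auto

lemma coefsum_scale[simp]: "coefsum b (map (\<lambda>(c, d). (r * c, d)) ys) = r * coefsum b ys"
  by (induction ys) (auto simp: algebra_simps)

lemma coefsum_notin: "b \<notin> set (map snd xs) \<Longrightarrow> coefsum b xs = 0"
  by (induction xs) auto

lemma coefsum_group: "distinct ds \<Longrightarrow> coefsum b (map (\<lambda>d. (f d, d)) ds) = (if b \<in> set ds then f b else 0)"
  by (induction ds) auto

lemma snd_scale[simp]: "map snd (map (\<lambda>(c, d). (r * c, d)) xs) = map snd xs"
  by (induction xs) auto

definition lce :: "('r \<times> 'm) list \<Rightarrow> ('r, 'm) expr" where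
  "lce xs = foldr (\<lambda>(c, b) acc. EAdd (ESmul c (EGen b)) acc) xs EZero"

lemma lce_simps[simp]: "lce [] = EZero" "lce ((c, b) # xs) = EAdd (ESmul c (EGen b)) (lce xs)"
  by (simp_all add: lce_def)

lemma lce_append: "lce (xs @ ys) = foldr (\<lambda>(c, b) acc. EAdd (ESmul c (EGen b)) acc) xs (lce ys)"
  by (simp add: lce_def)

lemma lin_lce_gen: "lin (lce xs) (EGen b) = coefsum b xs"
  by (induction xs) auto

lemma lin_lce_other: "(\<forall>b. t \<noteq> EGen b) \<Longrightarrow> lin (lce xs) t = 0"
  by (induction xs) auto

lemma lin_lce_eq: "(\<forall>b. coefsum b xs = coefsum b ys) \<Longrightarrow> lin (lce xs) = lin (lce ys)"
proof (rule ext)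
  fix t assume h: "\<forall>b. coefsum b xs = coefsum b ys"
  show "lin (lce xs) t = lin (lce ys) t"
  proof (cases "\<exists>b. t = EGen b")
    case True then show ?thesis using h lin_lce_gen by metis
  next
    case False then show ?thesis using lin_lce_other by metis
  qed
qed

lemma lincomb_ev: "is_lie M \<Longrightarrow> set (map snd xs) \<subseteq> lcarrier M \<Longrightarrow> lincomb M xs = ev M (lce xs)"
  by (induction xs) (auto simp: lincomb_def)

lemma lincomb_C: "is_lie M \<Longrightarrow> set (map snd xs) \<subseteq> lcarrier M \<Longrightarrow> lincomb M xs \<in> lcarrier M"
  using lincomb_ev evc by metis

context fixes M :: "('r::comm_ring_1, 'm) liealg" and q :: nat and B
  assumes lieM: "is_lie M"
    and BC: "B \<subseteq> lcarrier M"
    and span: "\<forall>x\<in>lcarrier M. \<exists>xs. set (map snd xs) \<subseteq> B \<and> x = lincomb M xs"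
    and indep: "\<forall>xs. set (map snd xs) \<subseteq> B \<longrightarrow> distinct (map snd xs) \<longrightarrow>
              lincomb M xs = lzero M \<longrightarrow> (\<forall>c\<in>set (map fst xs). (of_nat q :: 'r) dvd c)"
begin

lemma uniq: assumes xs: "set (map snd xs) \<subseteq> B" and ys: "set (map snd ys) \<subseteq> B"
  and eq: "lincomb M xs = lincomb M ys"
  shows "(of_nat q :: 'r) dvd (coefsum b xs - coefsum b ys)"
proof -
  define zs where "zs = xs @ map (\<lambda>(c, d). (- c, d)) ys"
  define ds where "ds = remdups (map snd zs)"
  define gs where "gs = map (\<lambda>d. (coefsum d zs, d)) ds"
  have zsB: "set (map snd zs) \<subseteq> B" using xs ys unfolding zs_def by auto
  have gsB: "set (map snd gs) \<subseteq> B" using zsB unfolding gs_def ds_def by (auto simp: comp_def)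
  have dist: "distinct (map snd gs)" unfolding gs_def ds_def by (simp add: comp_def)
  have "lincomb M gs = ev M (lce gs)" using lincomb_ev[OF lieM] gsB BC by blast
  also have "\<dots> = ev M (EAdd (lce xs) (ESmul (-1) (lce ys)))"
  proof (rule ev_lin[OF lieM], rule ext)
    fix t
    show "lin (lce gs) t = lin (EAdd (lce xs) (ESmul (- 1) (lce ys))) t"
    proof (cases "\<exists>b. t = EGen b")
      case True
      then obtain b where t: "t = EGen b" by blast
      have "coefsum b gs = coefsum b zs"
        unfolding gs_def using coefsum_group[of ds b "\<lambda>d. coefsum d zs"] coefsum_notin[of b zs]
        by (auto simp: ds_def)
      then show ?thesis using t by (simp add: lin_lce_gen zs_def)
    next
      case False
      hence F: "\<forall>b. t \<noteq> EGen b" by blast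
      show ?thesis by (simp add: lin_lce_other[OF F])
    qed
  qed
  also have "\<dots> = ladd M (lincomb M xs) (lsmult M (-1) (lincomb M ys))"
    using lincomb_ev[OF lieM] xs ys BC by auto
  also have "\<dots> = lzero M" using eq L_neg[OF lieM] lincomb_C[OF lieM] ys BC by (metis order_trans)
  finally have "\<forall>c\<in>set (map fst gs). (of_nat q :: 'r) dvd c" using indep gsB dist by blast
  hence "(of_nat q :: 'r) dvd coefsum b zs"
    using coefsum_notin[of b zs] unfolding gs_def ds_def by (cases "b \<in> set (map snd zs)") auto
  thus ?thesis unfolding zs_def by simp
qed

definition Rep where "Rep A = (SOME xs. set (map snd xs) \<subseteq> B \<and> A = lincomb M xs)"

lemma Rep: "A \<in> lcarrier M \<Longrightarrow> set (map snd (Rep A)) \<subseteq> B \<and> A = lincomb M (Rep A)"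
  unfolding Rep_def using span by (metis (mono_tags, lifting) someI_ex)

definition crd where "crd b A = coefsum b (Rep A)"

lemma crd_uniq: "A \<in> lcarrier M \<Longrightarrow> set (map snd xs) \<subseteq> B \<Longrightarrow> A = lincomb M xs \<Longrightarrow>
   (of_nat q :: 'r) dvd (crd b A - coefsum b xs)"
  unfolding crd_def using uniq[OF conjunct1[OF Rep] _ trans[OF sym[OF conjunct2[OF Rep]]]] by blast

lemma lincomb_append: "set (map snd xs) \<subseteq> B \<Longrightarrow> set (map snd ys) \<subseteq> B \<Longrightarrow>
   lincomb M (xs @ ys) = ladd M (lincomb M xs) (lincomb M ys)"
proof -
  assume xs: "set (map snd xs) \<subseteq> B" and ys: "set (map snd ys) \<subseteq> B"
  have l: "lin (lce (xs @ ys)) = lin (EAdd (lce xs) (lce ys))"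
    by (rule ext, induction xs) auto
  have e: "ev M (lce (xs @ ys)) = ev M (EAdd (lce xs) (lce ys))"
    by (rule ev_lin[OF lieM l])
  have c1: "set (map snd xs) \<subseteq> lcarrier M" using xs BC by blast
  have c2: "set (map snd ys) \<subseteq> lcarrier M" using ys BC by blast
  have c3: "set (map snd (xs @ ys)) \<subseteq> lcarrier M" using c1 c2 by simp
  show ?thesis using e lincomb_ev[OF lieM c1] lincomb_ev[OF lieM c2] lincomb_ev[OF lieM c3] by simp
qed

lemma lincomb_scale: "set (map snd xs) \<subseteq> B \<Longrightarrow>
   lincomb M (map (\<lambda>(c, d). (r * c, d)) xs) = lsmult M r (lincomb M xs)"
proof -
  assume xs: "set (map snd xs) \<subseteq> B"
  have l: "lin (lce (map (\<lambda>(c, d). (r * c, d)) xs)) = lin (ESmul r (lce xs))"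
    by (rule ext, induction xs) (auto simp: algebra_simps)
  have e: "ev M (lce (map (\<lambda>(c, d). (r * c, d)) xs)) = ev M (ESmul r (lce xs))"
    by (rule ev_lin[OF lieM l])
  have c1: "set (map snd xs) \<subseteq> lcarrier M" using xs BC by blast
  have c3: "set (map snd (map (\<lambda>(c, d). (r * c, d)) xs)) \<subseteq> lcarrier M" using c1 by (simp only: snd_scale)
  show ?thesis using e lincomb_ev[OF lieM c1] lincomb_ev[OF lieM c3] by simp
qed

lemma crd_add: "A \<in> lcarrier M \<Longrightarrow> A' \<in> lcarrier M \<Longrightarrow>
   (of_nat q :: 'r) dvd (crd b (ladd M A A') - (crd b A + crd b A'))"
proof -
  assume A: "A \<in> lcarrier M" and A': "A' \<in> lcarrier M"
  have eA: "lincomb M (Rep A) = A" using Rep[OF A] by (rule sym[OF conjunct2])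
  have eA': "lincomb M (Rep A') = A'" using Rep[OF A'] by (rule sym[OF conjunct2])
  have "ladd M A A' = lincomb M (Rep A @ Rep A')"
    using lincomb_append[OF conjunct1[OF Rep[OF A]] conjunct1[OF Rep[OF A']]] eA eA' by simp
  moreover have "ladd M A A' \<in> lcarrier M" using A A' Ladd[OF lieM] by blast
  moreover have "set (map snd (Rep A @ Rep A')) \<subseteq> B" using conjunct1[OF Rep[OF A]] conjunct1[OF Rep[OF A']] by simp
  ultimately have "(of_nat q :: 'r) dvd (crd b (ladd M A A') - coefsum b (Rep A @ Rep A'))"
    by (metis crd_uniq)
  thus ?thesis unfolding crd_def by simp
qed

lemma crd_smul: "A \<in> lcarrier M \<Longrightarrow> (of_nat q :: 'r) dvd (crd b (lsmult M r A) - r * crd b A)"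
proof -
  assume A: "A \<in> lcarrier M"
  have eA: "lincomb M (Rep A) = A" using Rep[OF A] by (rule sym[OF conjunct2])
  have "lsmult M r A = lincomb M (map (\<lambda>(c, d). (r * c, d)) (Rep A))"
    using lincomb_scale[OF conjunct1[OF Rep[OF A]]] eA by simp
  moreover have "lsmult M r A \<in> lcarrier M" using A Lsm[OF lieM] by blast
  moreover have "set (map snd (map (\<lambda>(c, d). (r * c, d)) (Rep A))) \<subseteq> B"
    using conjunct1[OF Rep[OF A]] by (simp only: snd_scale)
  ultimately have "(of_nat q :: 'r) dvd (crd b (lsmult M r A) - coefsum b (map (\<lambda>(c, d). (r * c, d)) (Rep A)))"
    by (metis crd_uniq)
  thus ?thesis unfolding crd_def by simp
qed

lemma crd_zero: "(of_nat q :: 'r) dvd crd b (lzero M)"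
proof -
  have "lzero M = lincomb M []" by (simp add: lincomb_def)
  from crd_uniq[OF Lz[OF lieM] _ this, of b] show ?thesis by simp
qed

end

fun Ev :: "('m \<Rightarrow> 'r::comm_ring_1) \<Rightarrow> ('m \<Rightarrow> 'r) \<Rightarrow> 'm set \<Rightarrow> ('r, 'm tgen) expr \<Rightarrow> 'r" where
  "Ev c1 c2 C (EGen (Tens A A')) = (if A \<in> C \<and> A' \<in> C then c1 A * c2 A' else 0)"
| "Ev c1 c2 C (EGen (Curly A)) = 0"
| "Ev c1 c2 C EZero = 0"
| "Ev c1 c2 C (EAdd a b) = Ev c1 c2 C a + Ev c1 c2 C b"
| "Ev c1 c2 C (ESmul r a) = r * Ev c1 c2 C a"
| "Ev c1 c2 C (EBrk a b) = 0"

definition lmq :: "('r::comm_ring_1, 'm) liealg \<Rightarrow> nat \<Rightarrow> ('m \<Rightarrow> 'r) \<Rightarrow> bool" where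
  "lmq M q c \<longleftrightarrow> (\<forall>A\<in>lcarrier M. \<forall>A'\<in>lcarrier M. of_nat q dvd (c (ladd M A A') - (c A + c A')))
     \<and> (\<forall>r. \<forall>A\<in>lcarrier M. of_nat q dvd (c (lsmult M r A) - r * c A))
     \<and> of_nat q dvd c (lzero M)"

lemma dvd_mul_diff: "(k::'r::comm_ring_1) dvd (x - y) \<Longrightarrow> k dvd (x * z - y * z)"
  by (metis dvd_mult2 left_diff_distrib)

lemma dvd_mul_diff': "(k::'r::comm_ring_1) dvd (x - y) \<Longrightarrow> k dvd (z * x - z * y)"
  by (metis dvd_mult right_diff_distrib)

context fixes M :: "('r::comm_ring_1, 'm) liealg" and q :: nat and c1 c2
  assumes lieM: "is_lie M"
    and brz: "\<forall>A\<in>lcarrier M. \<forall>A'\<in>lcarrier M. lbr M A A' = lzero M"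
    and l1: "lmq M q c1" and l2: "lmq M q c2"
begin

abbreviation "qq \<equiv> (of_nat q :: 'r)"
abbreviation "CM \<equiv> lcarrier M"
abbreviation "EE \<equiv> Ev c1 c2 (lcarrier M)"

lemma c1_add: "A \<in> CM \<Longrightarrow> A' \<in> CM \<Longrightarrow> qq dvd (c1 (ladd M A A') - (c1 A + c1 A'))"
  using l1 unfolding lmq_def by blast
lemma c2_add: "A \<in> CM \<Longrightarrow> A' \<in> CM \<Longrightarrow> qq dvd (c2 (ladd M A A') - (c2 A + c2 A'))"
  using l2 unfolding lmq_def by blast
lemma c1_sm: "A \<in> CM \<Longrightarrow> qq dvd (c1 (lsmult M r A) - r * c1 A)"
  using l1 unfolding lmq_def by blast
lemma c2_sm: "A \<in> CM \<Longrightarrow> qq dvd (c2 (lsmult M r A) - r * c2 A)"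
  using l2 unfolding lmq_def by blast
lemma c1_0: "qq dvd c1 (lzero M)" using l1 unfolding lmq_def by blast
lemma c2_0: "qq dvd c2 (lzero M)" using l2 unfolding lmq_def by blast

lemma c1_br: "A \<in> CM \<Longrightarrow> A' \<in> CM \<Longrightarrow> qq dvd c1 (lbr M A A')" using brz c1_0 by simp
lemma c2_br: "A \<in> CM \<Longrightarrow> A' \<in> CM \<Longrightarrow> qq dvd c2 (lbr M A A')" using brz c2_0 by simp

lemma c1_q: "A \<in> CM \<Longrightarrow> qq dvd c1 (lsmult M qq A)"
  using c1_sm[of A qq] by (metis dvd_add dvd_triv_left diff_add_cancel)
lemma c2_q: "A \<in> CM \<Longrightarrow> qq dvd c2 (lsmult M qq A)"
  using c2_sm[of A qq] by (metis dvd_add dvd_triv_left diff_add_cancel)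

lemmas MC = Lcl[OF lieM]

lemma rel_ok: "(a, b) \<in> tsq_rel M q \<Longrightarrow> qq dvd (EE a - EE b)"
proof -
  assume "(a, b) \<in> tsq_rel M q"
  then consider
    (na) x where "a = EGen x" "b = EZero" "x \<notin> tsq_gens M q"
  | (r1a) r h g where "a = ESmul r (T h g)" "b = T (lsmult M r h) g" "h \<in> CM" "g \<in> CM"
  | (r1b) r h g where "a = ESmul r (T h g)" "b = T h (lsmult M r g)" "h \<in> CM" "g \<in> CM"
  | (r2) h h' g where "a = T (ladd M h h') g" "b = EAdd (T h g) (T h' g)" "h \<in> CM" "h' \<in> CM" "g \<in> CM"
  | (r3) h g g' where "a = T h (ladd M g g')" "b = EAdd (T h g) (T h g')" "h \<in> CM" "g \<in> CM" "g' \<in> CM"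
  | (r4) h h' g where "a = T (lbr M h h') g" "b = EAdd (T h (lbr M h' g)) (ESmul (-1) (T h' (lbr M h g)))"
       "h \<in> CM" "h' \<in> CM" "g \<in> CM"
  | (r5) h g g' where "a = T h (lbr M g g')" "b = EAdd (T (lbr M g' h) g) (ESmul (-1) (T (lbr M g h) g'))"
       "h \<in> CM" "g \<in> CM" "g' \<in> CM"
  | (r6) h g h' g' where "a = EBrk (T h g) (T h' g')" "b = T (lbr M h g) (lbr M h' g')"
       "h \<in> CM" "g \<in> CM" "h' \<in> CM" "g' \<in> CM"
  | (r7) h' h g where "a = EBrk (Cu h') (T h g)"
       "b = EAdd (T (lbr M (lsmult M qq h') h) g) (T h (lbr M (lsmult M qq h') g))"
       "h' \<in> CM" "h \<in> CM" "g \<in> CM"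
  | (r8) r r' h h' where "a = Cu (ladd M (lsmult M r h) (lsmult M r' h'))" "b = EAdd (ESmul r (Cu h)) (ESmul r' (Cu h'))"
  | (r9) h h' where "a = EBrk (Cu h) (Cu h')" "b = T (lsmult M qq h) (lsmult M qq h')" "h \<in> CM" "h' \<in> CM"
  | (r10) h g where "a = Cu (lbr M h g)" "b = ESmul qq (T h g)" "h \<in> CM" "g \<in> CM"
    unfolding tsq_rel_def by (auto split: if_splits)
  then show ?thesis
  proof cases
    case (na x)
    then show ?thesis by (cases x) (auto simp: tsq_gens_def)
  next
    case (r1a r h g)
    then show ?thesis using MC dvd_mul_diff[OF c1_sm[of h r], of "c2 g"]
      by (auto simp: algebra_simps dvd_diff_commute)
  next
    case (r1b r h g)
    then show ?thesis using MC dvd_mul_diff'[OF c2_sm[of g r], of "c1 h"]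
      by (auto simp: algebra_simps dvd_diff_commute)
  next
    case (r2 h h' g)
    then show ?thesis using MC dvd_mul_diff[OF c1_add[of h h'], of "c2 g"]
      by (auto simp: algebra_simps)
  next
    case (r3 h g g')
    then show ?thesis using MC dvd_mul_diff'[OF c2_add[of g g'], of "c1 h"]
      by (auto simp: algebra_simps)
  next
    case (r4 h h' g)
    have "qq dvd c1 (lbr M h h') * c2 g" using r4 c1_br by (simp add: dvd_mult2)
    moreover have "qq dvd c1 h * c2 (lbr M h' g)" using r4 c2_br by (simp add: dvd_mult)
    moreover have "qq dvd c1 h' * c2 (lbr M h g)" using r4 c2_br by (simp add: dvd_mult)
    ultimately show ?thesis using r4 MC by (simp add: dvd_add dvd_diff)
  next
    case (r5 h g g')
    have "qq dvd c1 h * c2 (lbr M g g')" using r5 c2_br by (simp add: dvd_mult)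
    moreover have "qq dvd c1 (lbr M g' h) * c2 g" using r5 c1_br by (simp add: dvd_mult2)
    moreover have "qq dvd c1 (lbr M g h) * c2 g'" using r5 c1_br by (simp add: dvd_mult2)
    ultimately show ?thesis using r5 MC by (simp add: dvd_add dvd_diff)
  next
    case (r6 h g h' g')
    have "qq dvd c1 (lbr M h g) * c2 (lbr M h' g')" using r6 c1_br by (simp add: dvd_mult2)
    then show ?thesis using r6 MC by simp
  next
    case (r7 h' h g)
    have hq: "lsmult M qq h' \<in> CM" using r7 MC by blast
    have "qq dvd c1 (lbr M (lsmult M qq h') h) * c2 g" using r7 hq c1_br by (simp add: dvd_mult2)
    moreover have "qq dvd c1 h * c2 (lbr M (lsmult M qq h') g)" using r7 hq c2_br by (simp add: dvd_mult)
    ultimately show ?thesis using r7 hq MC by (simp add: dvd_add)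
  next
    case (r8 r r' h h')
    then show ?thesis by simp
  next
    case (r9 h h')
    have "qq dvd c1 (lsmult M qq h) * c2 (lsmult M qq h')" using r9 c1_q by (simp add: dvd_mult2)
    then show ?thesis using r9 MC by simp
  next
    case (r10 h g)
    then show ?thesis by simp
  qed
qed

lemma Ev_inv: "lie_cong (tsq_rel M q) a b \<Longrightarrow> qq dvd (EE a - EE b)"
proof (induction rule: lie_cong.induct)
  case (lc_rel a b) then show ?case by (rule rel_ok)
next
  case (lc_sym a b) then show ?case by (metis dvd_minus_iff minus_diff_eq)
next
  case (lc_trans a b c)
  have "EE a - EE c = (EE a - EE b) + (EE b - EE c)" by simp
  then show ?case using lc_trans by (metis dvd_add)
next
  case (lc_add a a' b b')
  have "EE (EAdd a b) - EE (EAdd a' b') = (EE a - EE a') + (EE b - EE b')" by simp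
  then show ?case using lc_add by (metis dvd_add)
next
  case (lc_smul a a' r) then show ?case by (simp add: dvd_mul_diff')
qed (simp_all add: algebra_simps)

end

lemma c_neg_of_sum: "lie_cong R (EAdd X Y) EZero \<Longrightarrow> lie_cong R X (ESmul (-1) Y)"
proof -
  assume h: "lie_cong R (EAdd X Y) EZero"
  have "lie_cong R X (EAdd (EAdd X Y) (ESmul (-1) Y))" by (rule lin_cong) (simp add: fun_eq_iff)
  also have "lie_cong R \<dots> (EAdd EZero (ESmul (-1) Y))" by (rule lc_add[OF h lc_refl])
  also have "lie_cong R \<dots> (ESmul (-1) Y)" by (rule c_zero_add)
  finally show ?thesis .
qed

lemma c_add_zeros: "lie_cong R a EZero \<Longrightarrow> lie_cong R b EZero \<Longrightarrow> lie_cong R (EAdd a b) EZero"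
  by (meson lc_add lc_add_zero lc_trans)

context fixes L :: "('r::comm_ring_1, 'a) liealg" and q :: nat
  assumes lie: "is_lie L"
begin

abbreviation "C \<equiv> lcarrier L"
abbreviation "qL \<equiv> (of_nat q :: 'r)"
abbreviation eq2 (infix "\<approx>" 50) where "a \<approx> b \<equiv> lie_cong (tsq_rel L q) a b"

lemmas LC6 = Lcl[OF lie]

lemma Z_sm0: "lsmult L r (lzero L) = lzero L"
proof -
  have "ev L (ESmul r EZero) = ev L EZero" by (rule ev_lin[OF lie]) (simp add: fun_eq_iff)
  thus ?thesis by simp
qed

lemma Z_0sm: "x \<in> C \<Longrightarrow> lsmult L 0 x = lzero L"
proof -
  assume x: "x \<in> C"
  have "ev L (ESmul 0 (EGen x)) = ev L EZero" by (rule ev_lin[OF lie]) (simp add: fun_eq_iff)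
  thus ?thesis using x by simp
qed

lemma t_sm_l: "h \<in> C \<Longrightarrow> g \<in> C \<Longrightarrow> ESmul r (T h g) \<approx> T (lsmult L r h) g"
  by (rule lc_rel) (auto simp: tsq_rel_def)
lemma t_sm_r: "h \<in> C \<Longrightarrow> g \<in> C \<Longrightarrow> ESmul r (T h g) \<approx> T h (lsmult L r g)"
  by (rule lc_rel) (auto simp: tsq_rel_def)
lemma t_add_l: "h \<in> C \<Longrightarrow> h' \<in> C \<Longrightarrow> g \<in> C \<Longrightarrow> T (ladd L h h') g \<approx> EAdd (T h g) (T h' g)"
  by (rule lc_rel) (auto simp: tsq_rel_def)
lemma t_add_r: "h \<in> C \<Longrightarrow> g \<in> C \<Longrightarrow> g' \<in> C \<Longrightarrow> T h (ladd L g g') \<approx> EAdd (T h g) (T h g')"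
  by (rule lc_rel) (auto simp: tsq_rel_def)
lemma t4: "h \<in> C \<Longrightarrow> h' \<in> C \<Longrightarrow> g \<in> C \<Longrightarrow>
   T (lbr L h h') g \<approx> EAdd (T h (lbr L h' g)) (ESmul (-1) (T h' (lbr L h g)))"
  by (rule lc_rel) (auto simp: tsq_rel_def)
lemma t5: "h \<in> C \<Longrightarrow> g \<in> C \<Longrightarrow> g' \<in> C \<Longrightarrow>
   T h (lbr L g g') \<approx> EAdd (T (lbr L g' h) g) (ESmul (-1) (T (lbr L g h) g'))"
  by (rule lc_rel) (auto simp: tsq_rel_def)
lemma t6: "h \<in> C \<Longrightarrow> g \<in> C \<Longrightarrow> h' \<in> C \<Longrightarrow> g' \<in> C \<Longrightarrow>
   EBrk (T h g) (T h' g') \<approx> T (lbr L h g) (lbr L h' g')"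
  by (rule lc_rel) (auto simp: tsq_rel_def)
lemma t8: "q \<ge> 1 \<Longrightarrow> h \<in> C \<Longrightarrow> h' \<in> C \<Longrightarrow>
   Cu (ladd L (lsmult L r h) (lsmult L r' h')) \<approx> EAdd (ESmul r (Cu h)) (ESmul r' (Cu h'))"
  by (rule lc_rel) (auto simp: tsq_rel_def)
lemma t9: "q \<ge> 1 \<Longrightarrow> h \<in> C \<Longrightarrow> h' \<in> C \<Longrightarrow>
   EBrk (Cu h) (Cu h') \<approx> T (lsmult L qL h) (lsmult L qL h')"
  by (rule lc_rel) (auto simp: tsq_rel_def)
lemma t10: "q \<ge> 1 \<Longrightarrow> h \<in> C \<Longrightarrow> g \<in> C \<Longrightarrow> Cu (lbr L h g) \<approx> ESmul qL (T h g)"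
  by (rule lc_rel) (auto simp: tsq_rel_def)

lemma t_zero_l: "g \<in> C \<Longrightarrow> T (lzero L) g \<approx> EZero"
proof -
  assume g: "g \<in> C"
  have "T (lzero L) g = T (lsmult L 0 g) g" using Z_0sm[OF g] by simp
  also have "T (lsmult L 0 g) g \<approx> ESmul 0 (T g g)" by (rule lc_sym, rule t_sm_l[OF g g])
  also have "\<dots> \<approx> EZero" by (rule c_smul0)
  finally show ?thesis .
qed

lemma t_zero_r: "g \<in> C \<Longrightarrow> T g (lzero L) \<approx> EZero"
proof -
  assume g: "g \<in> C"
  have "T g (lzero L) = T g (lsmult L 0 g)" using Z_0sm[OF g] by simp
  also have "T g (lsmult L 0 g) \<approx> ESmul 0 (T g g)" by (rule lc_sym, rule t_sm_r[OF g g])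
  also have "\<dots> \<approx> EZero" by (rule c_smul0)
  finally show ?thesis .
qed

lemma cu0: "q \<ge> 1 \<Longrightarrow> Cu (lzero L) \<approx> EZero"
proof -
  assume q: "q \<ge> 1"
  have z: "lzero L \<in> C" by (rule Lz[OF lie])
  have "ladd L (lsmult L 0 (lzero L)) (lsmult L 0 (lzero L)) = lzero L"
    using Z_sm0 L_zero[OF lie z] by simp
  hence "Cu (lzero L) = Cu (ladd L (lsmult L 0 (lzero L)) (lsmult L 0 (lzero L)))" by simp
  also have "\<dots> \<approx> EAdd (ESmul 0 (Cu (lzero L))) (ESmul 0 (Cu (lzero L)))" by (rule t8[OF q z z])
  also have "\<dots> \<approx> EZero" by (rule lin_cong) (simp add: fun_eq_iff)
  finally show ?thesis .
qed

lemma br_anti: "a \<in> C \<Longrightarrow> b \<in> C \<Longrightarrow> ladd L (lbr L a b) (lbr L b a) = lzero L"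
proof -
  assume a: "a \<in> C" and b: "b \<in> C"
  have "lzero L = lbr L (ladd L a b) (ladd L a b)" using L_alt[OF lie] LC6 a b by simp
  also have "\<dots> = ladd L (lbr L a (ladd L a b)) (lbr L b (ladd L a b))"
    using L_braddL[OF lie a b] LC6 a b by simp
  also have "\<dots> = ladd L (ladd L (lbr L a a) (lbr L a b)) (ladd L (lbr L b a) (lbr L b b))"
    using L_braddR[OF lie a a b] L_braddR[OF lie b a b] by simp
  also have "\<dots> = ev L (EAdd (EAdd EZero (EBrk (EGen a) (EGen b))) (EAdd (EBrk (EGen b) (EGen a)) EZero))"
    using L_alt[OF lie] a b by simp
  also have "\<dots> = ev L (EAdd (EBrk (EGen a) (EGen b)) (EBrk (EGen b) (EGen a)))"
    by (rule ev_lin[OF lie]) (simp add: fun_eq_iff)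
  finally show ?thesis using a b by simp
qed

lemma br_anti2: "a \<in> C \<Longrightarrow> b \<in> C \<Longrightarrow> lbr L b a = lsmult L (-1) (lbr L a b)"
proof -
  assume a: "a \<in> C" and b: "b \<in> C"
  define u where "u = lbr L a b"
  define v where "v = lbr L b a"
  have uv: "u \<in> C" "v \<in> C" using a b LC6 unfolding u_def v_def by auto
  have "ev L (EAdd (EAdd (EGen u) (EGen v)) (ESmul (-1) (EGen u))) = ev L (EGen v)"
    by (rule ev_lin[OF lie]) (simp add: fun_eq_iff)
  hence "ladd L (ladd L u v) (lsmult L (-1) u) = v" using uv by simp
  hence "ladd L (lzero L) (lsmult L (-1) u) = v" using br_anti[OF a b] unfolding u_def v_def by simp
  moreover have "ladd L (lzero L) (lsmult L (-1) u) = lsmult L (-1) u"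
    using L_comm[OF lie] L_zero[OF lie] LC6 uv by metis
  ultimately show ?thesis unfolding u_def v_def by simp
qed

lemma qS: "a \<in> C \<Longrightarrow> b \<in> C \<Longrightarrow> ESmul qL (EAdd (T a b) (T b a)) \<approx> EZero"
proof (cases "q = 0")
  case True
  then show ?thesis using c_smul0 by simp
next
  case False
  hence q: "q \<ge> 1" by simp
  assume a: "a \<in> C" and b: "b \<in> C"
  have "ESmul qL (EAdd (T a b) (T b a)) \<approx> EAdd (ESmul qL (T a b)) (ESmul qL (T b a))" by (rule lc_smul_add)
  also have "\<dots> \<approx> EAdd (Cu (lbr L a b)) (Cu (lbr L b a))"
    by (rule lc_add; rule lc_sym; rule t10[OF q]) (simp_all add: a b)
  also have "\<dots> \<approx> EAdd (ESmul 1 (Cu (lbr L a b))) (ESmul 1 (Cu (lbr L b a)))"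
    by (rule lin_cong) (simp add: fun_eq_iff)
  also have "\<dots> \<approx> Cu (ladd L (lsmult L 1 (lbr L a b)) (lsmult L 1 (lbr L b a)))"
    by (rule lc_sym, rule t8[OF q]) (simp_all add: a b LC6)
  also have "\<dots> = Cu (lzero L)" using L_one[OF lie] br_anti[OF a b] LC6 a b by simp
  also have "\<dots> \<approx> EZero" by (rule cu0[OF q])
  finally show ?thesis .
qed

lemma qT: "a \<in> C \<Longrightarrow> ESmul qL (T a a) \<approx> EZero"
proof (cases "q = 0")
  case True
  then show ?thesis using c_smul0 by simp
next
  case False
  hence q: "q \<ge> 1" by simp
  assume a: "a \<in> C"
  have "ESmul qL (T a a) \<approx> Cu (lbr L a a)" by (rule lc_sym, rule t10[OF q a a])
  also have "\<dots> = Cu (lzero L)" using L_alt[OF lie a] by simp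
  also have "\<dots> \<approx> EZero" by (rule cu0[OF q])
  finally show ?thesis .
qed

end

context fixes L :: "('r::comm_ring_1, 'a) liealg" and q :: nat
  assumes lie: "is_lie L"
begin

abbreviation "CC \<equiv> lcarrier L"
abbreviation eq3 (infix "\<approx>" 50) where "a \<approx> b \<equiv> lie_cong (tsq_rel L q) a b"
abbreviation "F x y z \<equiv> EAdd (T x (lbr L y z)) (T (lbr L y z) x)"

lemmas LC7 = Lcl[OF lie]

lemma F_xyx: "x \<in> CC \<Longrightarrow> y \<in> CC \<Longrightarrow> F x y x \<approx> EZero"
proof -
  assume x: "x \<in> CC" and y: "y \<in> CC"
  have "T (lbr L y x) x \<approx> EAdd (T y (lbr L x x)) (ESmul (-1) (T x (lbr L y x)))" by (rule t4[OF lie y x x])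
  also have "\<dots> = EAdd (T y (lzero L)) (ESmul (-1) (T x (lbr L y x)))" using L_alt[OF lie x] by simp
  also have "\<dots> \<approx> EAdd EZero (ESmul (-1) (T x (lbr L y x)))" by (rule lc_add[OF t_zero_r[OF lie y] lc_refl])
  finally have h: "T (lbr L y x) x \<approx> EAdd EZero (ESmul (-1) (T x (lbr L y x)))" .
  have "F x y x \<approx> EAdd (T x (lbr L y x)) (EAdd EZero (ESmul (-1) (T x (lbr L y x))))"
    by (rule lc_add[OF lc_refl h])
  also have "\<dots> \<approx> EZero" by (rule lin_cong) (simp add: fun_eq_iff)
  finally show ?thesis .
qed

lemma F_swap13: "x \<in> CC \<Longrightarrow> y \<in> CC \<Longrightarrow> z \<in> CC \<Longrightarrow> EAdd (F x y z) (F z y x) \<approx> EZero"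
proof -
  assume x: "x \<in> CC" and y: "y \<in> CC" and z: "z \<in> CC"
  have yx: "lbr L y x \<in> CC" and yz: "lbr L y z \<in> CC" and xz: "ladd L x z \<in> CC" using LC7 x y z by auto
  have e: "lbr L y (ladd L x z) = ladd L (lbr L y x) (lbr L y z)" by (rule L_braddR[OF lie y x z])
  have "T (ladd L x z) (ladd L (lbr L y x) (lbr L y z)) \<approx>
        EAdd (T x (ladd L (lbr L y x) (lbr L y z))) (T z (ladd L (lbr L y x) (lbr L y z)))"
    by (rule t_add_l[OF lie x z]) (simp add: LC7 yx yz)
  also have "\<dots> \<approx> EAdd (EAdd (T x (lbr L y x)) (T x (lbr L y z))) (EAdd (T z (lbr L y x)) (T z (lbr L y z)))"
    by (rule lc_add; rule t_add_r[OF lie]) (simp_all add: x z yx yz)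
  finally have h1: "T (ladd L x z) (ladd L (lbr L y x) (lbr L y z)) \<approx>
      EAdd (EAdd (T x (lbr L y x)) (T x (lbr L y z))) (EAdd (T z (lbr L y x)) (T z (lbr L y z)))" .
  have "T (ladd L (lbr L y x) (lbr L y z)) (ladd L x z) \<approx>
        EAdd (T (lbr L y x) (ladd L x z)) (T (lbr L y z) (ladd L x z))"
    by (rule t_add_l[OF lie yx yz xz])
  also have "\<dots> \<approx> EAdd (EAdd (T (lbr L y x) x) (T (lbr L y x) z)) (EAdd (T (lbr L y z) x) (T (lbr L y z) z))"
    by (rule lc_add; rule t_add_r[OF lie]) (simp_all add: x z yx yz)
  finally have h2: "T (ladd L (lbr L y x) (lbr L y z)) (ladd L x z) \<approx>
      EAdd (EAdd (T (lbr L y x) x) (T (lbr L y x) z)) (EAdd (T (lbr L y z) x) (T (lbr L y z) z))" .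
  have "EAdd (EAdd (F x y x) (F z y z)) (EAdd (F x y z) (F z y x)) \<approx>
     EAdd (EAdd (EAdd (T x (lbr L y x)) (T x (lbr L y z))) (EAdd (T z (lbr L y x)) (T z (lbr L y z))))
          (EAdd (EAdd (T (lbr L y x) x) (T (lbr L y x) z)) (EAdd (T (lbr L y z) x) (T (lbr L y z) z)))"
    by (rule lin_cong) (simp add: fun_eq_iff algebra_simps)
  also have "\<dots> \<approx> F (ladd L x z) y (ladd L x z)"
    unfolding e by (rule lc_add[OF lc_sym[OF h1] lc_sym[OF h2]])
  also have "\<dots> \<approx> EZero" by (rule F_xyx[OF xz y])
  finally have h3: "EAdd (EAdd (F x y x) (F z y z)) (EAdd (F x y z) (F z y x)) \<approx> EZero" .
  have "EAdd (F x y z) (F z y x) \<approx> EAdd (EAdd EZero EZero) (EAdd (F x y z) (F z y x))"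
    by (rule lin_cong) (simp add: fun_eq_iff)
  also have "\<dots> \<approx> EAdd (EAdd (F x y x) (F z y z)) (EAdd (F x y z) (F z y x))"
    by (rule lc_add[OF lc_add lc_refl]; rule lc_sym; rule F_xyx) (simp_all add: x y z)
  also have "\<dots> \<approx> EZero" by (rule h3)
  finally show ?thesis .
qed

lemma F_swap23: "x \<in> CC \<Longrightarrow> y \<in> CC \<Longrightarrow> z \<in> CC \<Longrightarrow> F x z y \<approx> ESmul (-1) (F x y z)"
proof -
  assume x: "x \<in> CC" and y: "y \<in> CC" and z: "z \<in> CC"
  have yz: "lbr L y z \<in> CC" using LC7 y z by auto
  have e: "lbr L z y = lsmult L (-1) (lbr L y z)" by (rule br_anti2[OF lie y z])
  have "F x z y \<approx> EAdd (ESmul (-1) (T x (lbr L y z))) (ESmul (-1) (T (lbr L y z) x))"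
    unfolding e by (rule lc_add; rule lc_sym) (simp_all add: t_sm_r[OF lie x yz] t_sm_l[OF lie yz x])
  also have "\<dots> \<approx> ESmul (-1) (F x y z)" by (rule lin_cong) (simp add: fun_eq_iff algebra_simps)
  finally show ?thesis .
qed

lemma F_cyc: "g \<in> CC \<Longrightarrow> a \<in> CC \<Longrightarrow> b \<in> CC \<Longrightarrow>
   F g a b \<approx> EAdd (F a b g) (ESmul (-1) (F b a g))"
proof -
  assume g: "g \<in> CC" and a: "a \<in> CC" and b: "b \<in> CC"
  have "F g a b \<approx> EAdd (EAdd (T (lbr L b g) a) (ESmul (-1) (T (lbr L a g) b)))
                       (EAdd (T a (lbr L b g)) (ESmul (-1) (T b (lbr L a g))))"
    by (rule lc_add[OF t5[OF lie g a b] t4[OF lie a b g]])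
  also have "\<dots> \<approx> EAdd (F a b g) (ESmul (-1) (F b a g))"
    by (rule lin_cong) (simp add: fun_eq_iff algebra_simps)
  finally show ?thesis .
qed

lemma F_zero: "g \<in> CC \<Longrightarrow> a \<in> CC \<Longrightarrow> b \<in> CC \<Longrightarrow> F g a b \<approx> EZero"
proof -
  assume g: "g \<in> CC" and a: "a \<in> CC" and b: "b \<in> CC"
  have "F a b g \<approx> ESmul (-1) (F g b a)" by (rule c_neg_of_sum, rule F_swap13[OF a b g])
  also have "\<dots> \<approx> ESmul (-1) (ESmul (-1) (F g a b))" by (rule lc_smul, rule F_swap23[OF g a b])
  also have "\<dots> \<approx> F g a b" by (rule lin_cong) (simp add: fun_eq_iff)
  finally have h1: "F a b g \<approx> F g a b" .
  have "F b a g \<approx> ESmul (-1) (F b g a)" by (rule F_swap23[OF b g a])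
  also have "\<dots> \<approx> ESmul (-1) (ESmul (-1) (F a g b))" by (rule lc_smul, rule c_neg_of_sum, rule F_swap13[OF b g a])
  also have "\<dots> \<approx> ESmul (-1) (ESmul (-1) (ESmul (-1) (F a b g)))" by (rule lc_smul, rule lc_smul, rule F_swap23[OF a b g])
  also have "\<dots> \<approx> ESmul (-1) (ESmul (-1) (ESmul (-1) (F g a b)))" by (rule lc_smul, rule lc_smul, rule lc_smul, rule h1)
  also have "\<dots> \<approx> ESmul (-1) (F g a b)" by (rule lin_cong) (simp add: fun_eq_iff)
  finally have h2: "F b a g \<approx> ESmul (-1) (F g a b)" .
  have "F g a b \<approx> EAdd (F a b g) (ESmul (-1) (F b a g))" by (rule F_cyc[OF g a b])
  also have "\<dots> \<approx> EAdd (F g a b) (ESmul (-1) (ESmul (-1) (F g a b)))" by (rule lc_add[OF h1 lc_smul[OF h2]])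
  also have "\<dots> \<approx> EAdd (F g a b) (F g a b)" by (rule lin_cong) (simp add: fun_eq_iff)
  finally have "EAdd (F g a b) (F g a b) \<approx> F g a b" by (rule lc_sym)
  thus ?thesis by (rule c_add_cancel_aux)
qed

end

context fixes L :: "('r::comm_ring_1, 'a) liealg" and q :: nat
  assumes lie: "is_lie L"
begin

abbreviation "C8 \<equiv> lcarrier L"
abbreviation eq8 (infix "\<approx>" 50) where "a \<approx> b \<equiv> lie_cong (tsq_rel L q) a b"

lemmas LC8 = Lcl[OF lie]

definition good where
  "good n \<longleftrightarrow> n \<in> C8 \<and> (\<forall>w\<in>C8. EAdd (T w n) (T n w) \<approx> EZero) \<and> T n n \<approx> EZero"

lemma good_D1: "good n \<Longrightarrow> n \<in> C8" unfolding good_def by blast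
lemma good_D2: "good n \<Longrightarrow> w \<in> C8 \<Longrightarrow> EAdd (T w n) (T n w) \<approx> EZero" unfolding good_def by blast
lemma good_D3: "good n \<Longrightarrow> T n n \<approx> EZero" unfolding good_def by blast
lemma good_I: "n \<in> C8 \<Longrightarrow> (\<And>w. w \<in> C8 \<Longrightarrow> EAdd (T w n) (T n w) \<approx> EZero) \<Longrightarrow> T n n \<approx> EZero \<Longrightarrow> good n"
  unfolding good_def by blast

lemma good_zero: "good (lzero L)"
proof (rule good_I)
  show "lzero L \<in> C8" by (rule Lz[OF lie])
  show "EAdd (T w (lzero L)) (T (lzero L) w) \<approx> EZero" if w: "w \<in> C8" for w
    by (rule c_add_zeros[OF t_zero_r[OF lie w] t_zero_l[OF lie w]])
  show "T (lzero L) (lzero L) \<approx> EZero" by (rule t_zero_l[OF lie Lz[OF lie]])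
qed

lemma good_br: "a \<in> C8 \<Longrightarrow> b \<in> C8 \<Longrightarrow> good (lbr L a b)"
proof -
  assume a: "a \<in> C8" and b: "b \<in> C8"
  have "T (lbr L a b) (lbr L a b) \<approx> EBrk (T a b) (T a b)" by (rule lc_sym, rule t6[OF lie a b a b])
  also have "\<dots> \<approx> EZero" by (rule lc_alt)
  finally have 3: "T (lbr L a b) (lbr L a b) \<approx> EZero" .
  show ?thesis
  proof (rule good_I[OF _ _ 3])
    show "lbr L a b \<in> C8" using a b LC8 by blast
    show "EAdd (T w (lbr L a b)) (T (lbr L a b) w) \<approx> EZero" if w: "w \<in> C8" for w
      by (rule F_zero[OF lie w a b])
  qed
qed

lemma good_q: "h \<in> C8 \<Longrightarrow> good (lsmult L (of_nat q) h)"
proof -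
  assume h: "h \<in> C8"
  have hq: "lsmult L (of_nat q) h \<in> C8" using h LC8 by blast
  have 1: "T (lsmult L (of_nat q) h) (lsmult L (of_nat q) h) \<approx> EZero"
  proof (cases "q = 0")
    case True
    then show ?thesis using t_zero_l[OF lie] Z_0sm[OF lie h] LC8 by simp
  next
    case False
    hence q: "q \<ge> 1" by simp
    have "T (lsmult L (of_nat q) h) (lsmult L (of_nat q) h) \<approx> EBrk (Cu h) (Cu h)"
      by (rule lc_sym, rule t9[OF lie q h h])
    also have "\<dots> \<approx> EZero" by (rule lc_alt)
    finally show ?thesis .
  qed
  have 2: "EAdd (T w (lsmult L (of_nat q) h)) (T (lsmult L (of_nat q) h) w) \<approx> EZero" if w: "w \<in> C8" for w
  proof -
    have "EAdd (T w (lsmult L (of_nat q) h)) (T (lsmult L (of_nat q) h) w) \<approx>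
          EAdd (ESmul (of_nat q) (T w h)) (ESmul (of_nat q) (T h w))"
      by (rule lc_add; rule lc_sym) (simp_all add: t_sm_r[OF lie w h] t_sm_l[OF lie h w])
    also have "\<dots> \<approx> ESmul (of_nat q) (EAdd (T w h) (T h w))" by (rule lc_sym, rule lc_smul_add)
    also have "\<dots> \<approx> EZero" by (rule qS[OF lie w h])
    finally show ?thesis .
  qed
  show ?thesis by (rule good_I[OF hq 2 1])
qed

lemma good_add: "good n1 \<Longrightarrow> good n2 \<Longrightarrow> good (ladd L n1 n2)"
proof -
  assume g1: "good n1" and g2: "good n2"
  have n1: "n1 \<in> C8" and n2: "n2 \<in> C8" using g1 g2 good_D1 by auto
  have n12: "ladd L n1 n2 \<in> C8" using n1 n2 LC8 by blast
  have A: "EAdd (T w (ladd L n1 n2)) (T (ladd L n1 n2) w) \<approx> EZero" if w: "w \<in> C8" for w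
  proof -
    have "EAdd (T w (ladd L n1 n2)) (T (ladd L n1 n2) w) \<approx>
        EAdd (EAdd (T w n1) (T w n2)) (EAdd (T n1 w) (T n2 w))"
      by (rule lc_add[OF t_add_r[OF lie w n1 n2] t_add_l[OF lie n1 n2 w]])
    also have "\<dots> \<approx> EAdd (EAdd (T w n1) (T n1 w)) (EAdd (T w n2) (T n2 w))"
      by (rule lin_cong) (simp add: fun_eq_iff algebra_simps)
    also have "\<dots> \<approx> EZero" by (rule c_add_zeros[OF good_D2[OF g1 w] good_D2[OF g2 w]])
    finally show ?thesis .
  qed
  have "T (ladd L n1 n2) (ladd L n1 n2) \<approx> EAdd (T n1 (ladd L n1 n2)) (T n2 (ladd L n1 n2))"
    by (rule t_add_l[OF lie n1 n2 n12])
  also have "\<dots> \<approx> EAdd (EAdd (T n1 n1) (T n1 n2)) (EAdd (T n2 n1) (T n2 n2))"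
    by (rule lc_add[OF t_add_r[OF lie n1 n1 n2] t_add_r[OF lie n2 n1 n2]])
  also have "\<dots> \<approx> EAdd (EAdd (T n1 n1) (T n2 n2)) (EAdd (T n2 n1) (T n1 n2))"
    by (rule lin_cong) (simp add: fun_eq_iff algebra_simps)
  also have "\<dots> \<approx> EZero"
    by (rule c_add_zeros[OF c_add_zeros[OF good_D3[OF g1] good_D3[OF g2]] good_D2[OF g1 n2]])
  finally have 3: "T (ladd L n1 n2) (ladd L n1 n2) \<approx> EZero" .
  show ?thesis by (rule good_I[OF n12 A 3])
qed

lemma good_smul: "good n \<Longrightarrow> good (lsmult L r n)"
proof -
  assume g: "good n"
  have n: "n \<in> C8" using good_D1[OF g] .
  have rn: "lsmult L r n \<in> C8" using n LC8 by blast
  have A: "EAdd (T w (lsmult L r n)) (T (lsmult L r n) w) \<approx> EZero" if w: "w \<in> C8" for w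
  proof -
    have "EAdd (T w (lsmult L r n)) (T (lsmult L r n) w) \<approx> EAdd (ESmul r (T w n)) (ESmul r (T n w))"
      by (rule lc_add; rule lc_sym) (simp_all add: t_sm_r[OF lie w n] t_sm_l[OF lie n w])
    also have "\<dots> \<approx> ESmul r (EAdd (T w n) (T n w))" by (rule lc_sym, rule lc_smul_add)
    also have "\<dots> \<approx> ESmul r EZero" by (rule lc_smul[OF good_D2[OF g w]])
    also have "\<dots> \<approx> EZero" by (rule c_smul_zero)
    finally show ?thesis .
  qed
  have "T (lsmult L r n) (lsmult L r n) \<approx> ESmul r (T n (lsmult L r n))" by (rule lc_sym, rule t_sm_l[OF lie n rn])
  also have "\<dots> \<approx> ESmul r (ESmul r (T n n))" by (rule lc_smul, rule lc_sym, rule t_sm_r[OF lie n n])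
  also have "\<dots> \<approx> ESmul r (ESmul r EZero)" by (rule lc_smul, rule lc_smul, rule good_D3[OF g])
  also have "\<dots> \<approx> ESmul r EZero" by (rule lc_smul, rule c_smul_zero)
  also have "\<dots> \<approx> EZero" by (rule c_smul_zero)
  finally have 3: "T (lsmult L r n) (lsmult L r n) \<approx> EZero" .
  show ?thesis by (rule good_I[OF rn A 3])
qed

lemma good_sharp: "n \<in> sharp L q \<Longrightarrow> good n"
  unfolding sharp_def
proof (induction rule: submod_gen.induct)
  case sg_zero then show ?case by (rule good_zero)
next
  case (sg_gen s)
  then consider (a) h g where "s = lbr L h g" "h \<in> C8" "g \<in> C8"
    | (b) h where "s = lsmult L (of_nat q) h" "h \<in> C8" by blast
  then show ?case by cases (simp_all add: good_br good_q)
next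
  case (sg_add x y) then show ?case using good_add by blast
next
  case (sg_smult x r) then show ?case using good_smul by blast
qed

lemma quad_inv: "u \<in> C8 \<Longrightarrow> n \<in> sharp L q \<Longrightarrow> T (ladd L u n) (ladd L u n) \<approx> T u u"
proof -
  assume u: "u \<in> C8" and nN: "n \<in> sharp L q"
  have g: "good n" by (rule good_sharp[OF nN])
  have n: "n \<in> C8" using good_D1[OF g] .
  have un: "ladd L u n \<in> C8" using u n LC8 by blast
  have "T (ladd L u n) (ladd L u n) \<approx> EAdd (T u (ladd L u n)) (T n (ladd L u n))"
    by (rule t_add_l[OF lie u n un])
  also have "\<dots> \<approx> EAdd (EAdd (T u u) (T u n)) (EAdd (T n u) (T n n))"
    by (rule lc_add[OF t_add_r[OF lie u u n] t_add_r[OF lie n u n]])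
  also have "\<dots> \<approx> EAdd (T u u) (EAdd (EAdd (T u n) (T n u)) (T n n))"
    by (rule lin_cong) (simp add: fun_eq_iff algebra_simps)
  also have "\<dots> \<approx> EAdd (T u u) (EAdd EZero EZero)"
    by (rule lc_add[OF lc_refl lc_add[OF good_D2[OF g u] good_D3[OF g]]])
  also have "\<dots> \<approx> T u u" by (rule lin_cong) (simp add: fun_eq_iff)
  finally show ?thesis .
qed

end

fun esumN :: "nat \<Rightarrow> (nat \<Rightarrow> ('r, 'x) expr) \<Rightarrow> ('r, 'x) expr" where
  "esumN 0 Fn = EZero"
| "esumN (Suc m) Fn = EAdd (esumN m Fn) (Fn m)"

lemma lin_esumN: "lin (esumN m Fn) t = (\<Sum>i<m. lin (Fn i) t)"
  by (induction m) auto

lemma esumN_cong: "(\<And>i. i < m \<Longrightarrow> lie_cong R (Fn i) (Gn i)) \<Longrightarrow> lie_cong R (esumN m Fn) (esumN m Gn)"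
  by (induction m) (auto intro: lc_add lc_refl)

lemma esumN_zero: "(\<And>i. i < m \<Longrightarrow> lie_cong R (Fn i) EZero) \<Longrightarrow> lie_cong R (esumN m Fn) EZero"
  by (induction m) (auto intro: lc_refl c_add_zeros)

lemma dsum_split: "(\<Sum>i<Suc m. \<Sum>j<Suc m. f i j) =
   (\<Sum>i<m. \<Sum>j<m. f i j) + ((\<Sum>j<m. f j m + f m j) + f m m)"
  by (simp add: sum.distrib algebra_simps)

context fixes L :: "('r::comm_ring_1, 'a) liealg" and q :: nat
  assumes lie: "is_lie L"
begin

abbreviation "C9 \<equiv> lcarrier L"
abbreviation eq9 (infix "\<approx>" 50) where "a \<approx> b \<equiv> lie_cong (tsq_rel L q) a b"

lemmas LC9 = Lcl[OF lie]

lemma expand_l: "(\<And>i. i < m \<Longrightarrow> ee i \<in> C9) \<Longrightarrow> Y \<in> C9 \<Longrightarrow>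
  T (ev L (esumN m (\<lambda>i. ESmul (f i) (EGen (ee i))))) Y \<approx> esumN m (\<lambda>i. ESmul (f i) (T (ee i) Y))"
proof (induction m)
  case 0 then show ?case using t_zero_l[OF lie] by simp
next
  case (Suc m)
  have e: "ee m \<in> C9" using Suc by simp
  have X: "ev L (esumN m (\<lambda>i. ESmul (f i) (EGen (ee i)))) \<in> C9" by (rule evc[OF lie])
  have "T (ev L (esumN (Suc m) (\<lambda>i. ESmul (f i) (EGen (ee i))))) Y =
        T (ladd L (ev L (esumN m (\<lambda>i. ESmul (f i) (EGen (ee i))))) (lsmult L (f m) (ee m))) Y"
    using e by simp
  also have "\<dots> \<approx> EAdd (T (ev L (esumN m (\<lambda>i. ESmul (f i) (EGen (ee i))))) Y) (T (lsmult L (f m) (ee m)) Y)"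
    by (rule t_add_l[OF lie X _ Suc.prems(2)]) (simp add: LC9 e)
  also have "\<dots> \<approx> EAdd (esumN m (\<lambda>i. ESmul (f i) (T (ee i) Y))) (ESmul (f m) (T (ee m) Y))"
    by (rule lc_add[OF Suc.IH lc_sym[OF t_sm_l[OF lie e Suc.prems(2)]]]) (use Suc.prems in auto)
  finally show ?case by simp
qed

lemma expand_r: "(\<And>i. i < m \<Longrightarrow> ee i \<in> C9) \<Longrightarrow> Y \<in> C9 \<Longrightarrow>
  T Y (ev L (esumN m (\<lambda>i. ESmul (f i) (EGen (ee i))))) \<approx> esumN m (\<lambda>i. ESmul (f i) (T Y (ee i)))"
proof (induction m)
  case 0 then show ?case using t_zero_r[OF lie] by simp
next
  case (Suc m)
  have e: "ee m \<in> C9" using Suc by simp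
  have X: "ev L (esumN m (\<lambda>i. ESmul (f i) (EGen (ee i)))) \<in> C9" by (rule evc[OF lie])
  have "T Y (ev L (esumN (Suc m) (\<lambda>i. ESmul (f i) (EGen (ee i))))) =
        T Y (ladd L (ev L (esumN m (\<lambda>i. ESmul (f i) (EGen (ee i))))) (lsmult L (f m) (ee m)))"
    using e by simp
  also have "\<dots> \<approx> EAdd (T Y (ev L (esumN m (\<lambda>i. ESmul (f i) (EGen (ee i)))))) (T Y (lsmult L (f m) (ee m)))"
    by (rule t_add_r[OF lie Suc.prems(2) X]) (simp add: LC9 e)
  also have "\<dots> \<approx> EAdd (esumN m (\<lambda>i. ESmul (f i) (T Y (ee i)))) (ESmul (f m) (T Y (ee m)))"
    by (rule lc_add[OF Suc.IH lc_sym[OF t_sm_r[OF lie Suc.prems(2) e]]]) (use Suc.prems in auto)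
  finally show ?case by simp
qed

definition DS :: "nat \<Rightarrow> (nat \<Rightarrow> 'a) \<Rightarrow> (nat \<Rightarrow> nat \<Rightarrow> 'r) \<Rightarrow> ('r, 'a tgen) expr" where
  "DS m ee K = esumN m (\<lambda>i. esumN m (\<lambda>j. ESmul (K i j) (T (ee i) (ee j))))"

lemma lin_DS: "lin (DS m ee K) t = (\<Sum>i<m. \<Sum>j<m. K i j * (if t = T (ee i) (ee j) then 1 else 0))"
  unfolding DS_def by (simp add: lin_esumN)

lemma expand_sq: "(\<And>i. i < m \<Longrightarrow> ee i \<in> C9) \<Longrightarrow>
  T (ev L (esumN m (\<lambda>i. ESmul (f i) (EGen (ee i))))) (ev L (esumN m (\<lambda>i. ESmul (f i) (EGen (ee i)))))
   \<approx> DS m ee (\<lambda>i j. f i * f j)"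
proof -
  assume e: "\<And>i. i < m \<Longrightarrow> ee i \<in> C9"
  let ?u = "ev L (esumN m (\<lambda>i. ESmul (f i) (EGen (ee i))))"
  have u: "?u \<in> C9" by (rule evc[OF lie])
  have "T ?u ?u \<approx> esumN m (\<lambda>i. ESmul (f i) (T (ee i) ?u))" by (rule expand_l[OF e u])
  also have "\<dots> \<approx> esumN m (\<lambda>i. ESmul (f i) (esumN m (\<lambda>j. ESmul (f j) (T (ee i) (ee j)))))"
    by (rule esumN_cong, rule lc_smul, rule expand_r[OF e]) (use e in auto)
  also have "\<dots> \<approx> DS m ee (\<lambda>i j. f i * f j)"
    by (rule lin_cong) (simp add: fun_eq_iff lin_esumN lin_DS sum_distrib_left mult.assoc)
  finally show ?thesis .
qed

lemma DS_add: "EAdd (DS m ee K1) (DS m ee K2) \<approx> DS m ee (\<lambda>i j. K1 i j + K2 i j)"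
  by (rule lin_cong) (simp add: fun_eq_iff lin_DS sum.distrib algebra_simps)

lemma DS_smul: "ESmul r (DS m ee K) \<approx> DS m ee (\<lambda>i j. r * K i j)"
  by (rule lin_cong) (simp add: fun_eq_iff lin_DS sum_distrib_left algebra_simps)

lemma DS_zero: "EZero \<approx> DS m ee (\<lambda>i j. 0)"
  by (rule lin_cong) (simp add: fun_eq_iff lin_DS)

fun Zf :: "(nat \<Rightarrow> 'a) \<Rightarrow> (nat \<Rightarrow> nat \<Rightarrow> 'r) \<Rightarrow> nat \<Rightarrow> ('r, 'a tgen) expr" where
  "Zf ee k 0 = EZero"
| "Zf ee k (Suc m) = EAdd (Zf ee k m)
     (EAdd (esumN m (\<lambda>j. ESmul (k j m) (ESmul (of_nat q) (EAdd (T (ee j) (ee m)) (T (ee m) (ee j))))))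
           (ESmul (k m m) (ESmul (of_nat q) (T (ee m) (ee m)))))"

lemma Zf_zero: "(\<And>i. i < m \<Longrightarrow> ee i \<in> C9) \<Longrightarrow> Zf ee k m \<approx> EZero"
proof (induction m)
  case 0 then show ?case by (simp add: lc_refl)
next
  case (Suc m)
  have e: "ee m \<in> C9" using Suc by simp
  have a: "esumN m (\<lambda>j. ESmul (k j m) (ESmul (of_nat q) (EAdd (T (ee j) (ee m)) (T (ee m) (ee j))))) \<approx> EZero"
  proof (rule esumN_zero)
    fix j assume j: "j < m"
    have "ESmul (k j m) (ESmul (of_nat q) (EAdd (T (ee j) (ee m)) (T (ee m) (ee j)))) \<approx> ESmul (k j m) EZero"
      by (rule lc_smul, rule qS[OF lie]) (use Suc.prems j in auto)
    also have "\<dots> \<approx> EZero" by (rule c_smul_zero)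
    finally show "ESmul (k j m) (ESmul (of_nat q) (EAdd (T (ee j) (ee m)) (T (ee m) (ee j)))) \<approx> EZero" .
  qed
  have b: "ESmul (k m m) (ESmul (of_nat q) (T (ee m) (ee m))) \<approx> EZero"
    by (rule lc_trans[OF lc_smul[OF qT[OF lie e]] c_smul_zero])
  show ?case using Suc by (simp add: c_add_zeros a b)
qed

lemma lin_Zf: "lin (Zf ee k m) t = (\<Sum>i<m. \<Sum>j<m. of_nat q * k i j * (if t = T (ee i) (ee j) then 1 else 0))"
  if sym: "\<And>i j. k i j = k j i"
proof (induction m)
  case 0 then show ?case by simp
next
  case (Suc m)
  let ?d = "\<lambda>i j. (if t = T (ee i) (ee j) then 1 else 0) :: 'r"
  have 1: "lin (Zf ee k (Suc m)) t = lin (Zf ee k m) t +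
     ((\<Sum>j<m. k j m * (of_nat q * (?d j m + ?d m j))) + k m m * (of_nat q * ?d m m))"
    by (simp add: lin_esumN)
  have 2: "(\<Sum>j<m. k j m * (of_nat q * (?d j m + ?d m j))) =
           (\<Sum>j<m. of_nat q * k j m * ?d j m + of_nat q * k m j * ?d m j)"
    by (rule sum.cong[OF refl]) (simp add: sym[of m] algebra_simps)
  show ?case
    unfolding dsum_split 1 2 Suc.IH by (simp add: algebra_simps)
qed

lemma pair_zero: assumes e: "\<And>i. i < m \<Longrightarrow> ee i \<in> C9"
  and K: "\<And>i j. K i j = of_nat q * k i j" and sym: "\<And>i j. k i j = k j i"
  shows "DS m ee K \<approx> EZero"
proof -
  have "DS m ee K \<approx> Zf ee k m"
    by (rule lin_cong) (simp add: fun_eq_iff lin_DS lin_Zf[OF sym] K)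
  also have "\<dots> \<approx> EZero" by (rule Zf_zero[OF e])
  finally show ?thesis .
qed

end

fun glist :: "('r, 'a tgen) expr \<Rightarrow> 'a list" where
  "glist (EGen (Tens g h)) = [g]"
| "glist (EGen (Curly g)) = []"
| "glist EZero = []"
| "glist (EAdd a b) = glist a @ glist b"
| "glist (ESmul r a) = glist a"
| "glist (EBrk a b) = glist a @ glist b"

lemma glist_C: "y \<in> espan {T g g | g. g \<in> lcarrier L} \<Longrightarrow> set (glist y) \<subseteq> lcarrier L"
  by (induction rule: espan.induct) auto

lemma Ev_sym: "y \<in> espan {T g g | g. g \<in> S} \<Longrightarrow>
   Ev c1 c2 CS (emap (pgen L N) y) = Ev c2 c1 CS (emap (pgen L N) y)"
  by (induction rule: espan.induct) (auto simp: mult.commute)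

lemma sum_nth_set: "distinct ds \<Longrightarrow> (\<Sum>i<length ds. h (ds ! i)) = (\<Sum>d\<in>set ds. h d)"
proof -
  assume d: "distinct ds"
  have "(\<Sum>d\<in>set ds. h d) = sum_list (map h ds)" by (rule sum.distinct_set_conv_list[OF d])
  also have "\<dots> = (\<Sum>i\<in>{0..<length ds}. h (ds ! i))" by (simp add: sum_list_sum_nth)
  finally show ?thesis by (simp add: atLeast0LessThan)
qed

theorem lemma5p2:
  fixes L :: "('r::comm_ring_1, 'a) liealg" and q :: nat
  assumes lie: "is_lie L"
    and free: "free_mod_q (quot L (sharp L q)) q"
  shows "\<forall>x \<in> espan {T g g | g. g \<in> lcarrier L}.
           tsq_eq (quot L (sharp L q)) q (emap (pgen L (sharp L q)) x) EZero
             \<longrightarrow> tsq_eq L q x EZero"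
proof (intro ballI impI)
  fix x
  assume xS: "x \<in> espan {T g g | g. g \<in> lcarrier L}"
    and hp: "tsq_eq (quot L (sharp L q)) q (emap (pgen L (sharp L q)) x) EZero"
  define N where "N = sharp L q"
  define M where "M = quot L N"
  have sm: "submod L N" unfolding N_def by (rule sharp_submod[OF lie])
  have brN: "\<forall>x\<in>lcarrier L. \<forall>y\<in>lcarrier L. lbr L x y \<in> N" unfolding N_def by (intro ballI sharp_br)
  have lieM: "is_lie M" unfolding M_def by (rule quot_is_lie[OF lie sm brN])
  have CM: "lcarrier M = coset L N ` lcarrier L" unfolding M_def by (rule quot_carrier[OF lie sm])
  have brz: "\<forall>A\<in>lcarrier M. \<forall>A'\<in>lcarrier M. lbr M A A' = lzero M"
  proof (intro ballI)
    fix A A' assume "A \<in> lcarrier M" "A' \<in> lcarrier M"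
    then obtain a a' where "a \<in> lcarrier L" "a' \<in> lcarrier L" "A = coset L N a" "A' = coset L N a'"
      unfolding CM by blast
    then show "lbr M A A' = lzero M"
      unfolding M_def using quot_br[OF lie sm brN] quot_zero[OF lie sm] by simp
  qed
  from free obtain B where BC: "B \<subseteq> lcarrier M"
    and span: "\<forall>x\<in>lcarrier M. \<exists>xs. set (map snd xs) \<subseteq> B \<and> x = lincomb M xs"
    and indep: "\<forall>xs. set (map snd xs) \<subseteq> B \<longrightarrow> distinct (map snd xs) \<longrightarrow>
              lincomb M xs = lzero M \<longrightarrow> (\<forall>c\<in>set (map fst xs). (of_nat q :: 'r) dvd c)"
    unfolding free_mod_q_def M_def N_def by blast
  let ?cr = "crd M B"
  have lmq: "lmq M q (?cr b)" for b
    unfolding lmq_def using crd_add[OF lieM BC span indep] crd_smul[OF lieM BC span indep]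
      crd_zero[OF lieM BC span indep] by blast
  have RepB: "set (map snd (Rep M B A)) \<subseteq> B" and RepE: "A = lincomb M (Rep M B A)"
    if "A \<in> lcarrier M" for A
    using Rep[OF lieM BC span indep that] by auto
  have crdE: "?cr b A = coefsum b (Rep M B A)" for b A by (rule crd_def[OF lieM BC span indep])
  have cosC: "coset L N g \<in> lcarrier M" if "g \<in> lcarrier L" for g using that CM by blast

  define ds where "ds = remdups (concat (map (\<lambda>g. map snd (Rep M B (coset L N g))) (glist x)))"
  define m where "m = length ds"
  define ee where "ee i = rep (ds ! i)" for i
  have gC: "set (glist x) \<subseteq> lcarrier L" by (rule glist_C[OF xS])
  have dsd: "distinct ds" unfolding ds_def by simp
  have dsB: "set ds \<subseteq> B" unfolding ds_def using gC RepB cosC by fastforce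
  have cover: "set (map snd (Rep M B (coset L N g))) \<subseteq> set ds" if "g \<in> set (glist x)" for g
    unfolding ds_def using that by auto
  have dsC: "ds ! i \<in> lcarrier M" if "i < m" for i using that dsB BC nth_mem unfolding m_def by blast
  have eeC: "ee i \<in> lcarrier L" if i: "i < m" for i
  proof -
    obtain y where y: "y \<in> lcarrier L" "ds ! i = coset L N y" using dsC[OF i] CM by auto
    show ?thesis unfolding ee_def y(2) by (rule rep_coset_C[OF lie sm y(1)])
  qed
  have cosee: "coset L N (ee i) = ds ! i" if i: "i < m" for i
  proof -
    obtain y where y: "y \<in> lcarrier L" "ds ! i = coset L N y" using dsC[OF i] CM by auto
    show ?thesis unfolding ee_def y(2) by (rule coset_rep[OF lie sm y(1)])
  qed

  have gen: "tsq_eq L q (T g g) (DS m ee (\<lambda>i j. ?cr (ds ! i) (coset L N g) * ?cr (ds ! j) (coset L N g)))"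
    if g: "g \<in> lcarrier L" and cov: "set (map snd (Rep M B (coset L N g))) \<subseteq> set ds" for g
  proof -
    define f where "f i = ?cr (ds ! i) (coset L N g)" for i
    define u where "u = ev L (esumN m (\<lambda>i. ESmul (f i) (EGen (ee i))))"
    have uC: "u \<in> lcarrier L" unfolding u_def by (rule evc[OF lie])
    have cu: "coset L N (ev L (esumN k (\<lambda>i. ESmul (f i) (EGen (ee i)))))
            = ev M (esumN k (\<lambda>i. ESmul (f i) (EGen (ds ! i))))" if "k \<le> m" for k
      using that
    proof (induction k)
      case 0 then show ?case by (simp add: M_def quot_zero[OF lie sm])
    next
      case (Suc k)
      have k: "k < m" using Suc by simp
      have X: "ev L (esumN k (\<lambda>i. ESmul (f i) (EGen (ee i)))) \<in> lcarrier L" by (rule evc[OF lie])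
      have "coset L N (ev L (esumN (Suc k) (\<lambda>i. ESmul (f i) (EGen (ee i)))))
          = coset L N (ladd L (ev L (esumN k (\<lambda>i. ESmul (f i) (EGen (ee i))))) (lsmult L (f k) (ee k)))"
        using eeC[OF k] by simp
      also have "\<dots> = ladd M (coset L N (ev L (esumN k (\<lambda>i. ESmul (f i) (EGen (ee i))))))
                              (lsmult M (f k) (coset L N (ee k)))"
        unfolding M_def using quot_add[OF lie sm X] quot_smult[OF lie sm eeC[OF k]] Lsm[OF lie eeC[OF k]]
        by simp
      also have "\<dots> = ev M (esumN (Suc k) (\<lambda>i. ESmul (f i) (EGen (ds ! i))))"
        using Suc.IH k cosee[OF k] dsC[OF k] by simp
      finally show ?case .
    qed
    have "coset L N u = ev M (esumN m (\<lambda>i. ESmul (f i) (EGen (ds ! i))))"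
      unfolding u_def by (rule cu) simp
    also have "\<dots> = ev M (lce (Rep M B (coset L N g)))"
    proof (rule ev_lin[OF lieM], rule ext)
      fix t
      show "lin (esumN m (\<lambda>i. ESmul (f i) (EGen (ds ! i)))) t = lin (lce (Rep M B (coset L N g))) t"
      proof (cases "\<exists>b. t = EGen b")
        case True
        then obtain b where t: "t = EGen b" by blast
        have "lin (esumN m (\<lambda>i. ESmul (f i) (EGen (ds ! i)))) t
            = (\<Sum>i<length ds. (\<lambda>d. if d = b then coefsum d (Rep M B (coset L N g)) else 0) (ds ! i))"
          unfolding lin_esumN m_def t f_def by (intro sum.cong refl) (auto simp: crdE)
        also have "\<dots> = (\<Sum>d\<in>set ds. (if d = b then coefsum d (Rep M B (coset L N g)) else 0))"
          by (rule sum_nth_set[OF dsd])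
        also have "\<dots> = (if b \<in> set ds then coefsum b (Rep M B (coset L N g)) else 0)"
          by (simp add: sum.delta')
        also have "\<dots> = coefsum b (Rep M B (coset L N g))"
          using coefsum_notin[of b "Rep M B (coset L N g)"] cov by auto
        finally show ?thesis using t by (simp add: lin_lce_gen)
      next
        case False
        hence F: "\<forall>b. t \<noteq> EGen b" by blast
        show ?thesis using F by (simp add: lin_esumN lin_lce_other[OF F])
      qed
    qed
    also have "\<dots> = coset L N g"
      using RepE[OF cosC[OF g]] lincomb_ev[OF lieM] RepB[OF cosC[OF g]] BC by (metis order_trans)
    finally have cug: "coset L N g = coset L N u" by simp
    hence nN: "ladd L g (lsmult L (-1) u) \<in> N" using coset_eq[OF lie sm g uC] by blast
    have "ev L (EAdd (EGen u) (EAdd (EGen g) (ESmul (-1) (EGen u)))) = ev L (EGen g)"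
      by (rule ev_lin[OF lie]) (simp add: fun_eq_iff)
    hence ge: "g = ladd L u (ladd L g (lsmult L (-1) u))" using g uC by simp
    have "tsq_eq L q (T g g) (T u u)"
      using quad_inv[OF lie uC nN[unfolded N_def]] ge by simp
    also have "tsq_eq L q (T u u) (DS m ee (\<lambda>i j. f i * f j))"
      unfolding u_def by (rule expand_sq[OF lie eeC])
    finally show ?thesis unfolding f_def .
  qed

  let ?K = "\<lambda>y i j. Ev (?cr (ds ! i)) (?cr (ds ! j)) (lcarrier M) (emap (pgen L N) y)"
  have main: "tsq_eq L q y (DS m ee (?K y))"
    if "y \<in> espan {T g g | g. g \<in> lcarrier L}"
       and "\<forall>g\<in>set (glist y). set (map snd (Rep M B (coset L N g))) \<subseteq> set ds" for y
    using that
  proof (induction rule: espan.induct)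
    case es_zero
    then show ?case using DS_zero[OF lie] by simp
  next
    case (es_gen s)
    then obtain g where s: "s = T g g" and g: "g \<in> lcarrier L" by blast
    have cov: "set (map snd (Rep M B (coset L N g))) \<subseteq> set ds" using es_gen s by simp
    show ?case using gen[OF g cov] s cosC[OF g] by simp
  next
    case (es_add a b)
    have "tsq_eq L q (EAdd a b) (EAdd (DS m ee (?K a)) (DS m ee (?K b)))"
      using es_add by (auto intro: lc_add)
    also have "tsq_eq L q \<dots> (DS m ee (\<lambda>i j. ?K a i j + ?K b i j))" by (rule DS_add[OF lie])
    finally show ?case by simp
  next
    case (es_smul a r)
    have "tsq_eq L q (ESmul r a) (ESmul r (DS m ee (?K a)))"
      using es_smul by (auto intro: lc_smul)
    also have "tsq_eq L q \<dots> (DS m ee (\<lambda>i j. r * ?K a i j))" by (rule DS_smul[OF lie])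
    finally show ?case by simp
  qed
  have xK: "tsq_eq L q x (DS m ee (?K x))"
    by (rule main[OF xS]) (use cover in blast)
  have hp': "tsq_eq M q (emap (pgen L N) x) EZero" using hp unfolding M_def N_def .
  define KK where "KK i j = ?K x i j" for i j
  have dv: "(of_nat q :: 'r) dvd KK i j" for i j
    unfolding KK_def using Ev_inv[OF lieM brz lmq lmq hp'] by simp
  have Ksym: "KK i j = KK j i" for i j unfolding KK_def by (rule Ev_sym[OF xS])
  define k0 where "k0 i j = (SOME kk. KK i j = of_nat q * kk)" for i j
  have k0: "KK i j = of_nat q * k0 i j" for i j
  proof -
    have "\<exists>kk. KK i j = of_nat q * kk" using dv[of i j] unfolding dvd_def by blast
    thus ?thesis unfolding k0_def by (rule someI_ex)
  qed
  define k where "k i j = k0 (min i j) (max i j)" for i j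
  have K: "KK i j = of_nat q * k i j" for i j
  proof (cases "i \<le> j")
    case True
    then have "min i j = i" "max i j = j" by auto
    then show ?thesis unfolding k_def using k0[of i j] by simp
  next
    case False
    then have "min i j = j" "max i j = i" by auto
    then show ?thesis unfolding k_def using k0[of j i] Ksym[of i j] by simp
  qed
  have ksym: "k i j = k j i" for i j unfolding k_def by (simp add: min.commute max.commute)
  have "tsq_eq L q (DS m ee KK) EZero" by (rule pair_zero[OF lie eeC K ksym])
  moreover have "DS m ee (?K x) = DS m ee KK" unfolding KK_def by simp
  ultimately show "tsq_eq L q x EZero" using xK lc_trans by metis
qed

end
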